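(* Let $\Gamma>0$ and $B\in\mathbb{R}$. For $N\in\mathbb{N}_+$ let $\bar H_N^{s}$ be the $(N+1)\times(N+1)$ real matrix \[ \bar H_N^{s}=\operatorname*{diag}_{1\le k\le N+1}\Big(-\frac{\Gamma}{2}\Big(\frac{2k}{N}-1\Big)^2\Big)+\mathrm{tridiag}\Big(-B\sqrt{1-\tfrac{k-1}{N}}\sqrt{\tfrac{k}{N}},\;0,\;-B\sqrt{1-\tfrac{k}{N}}\sqrt{\tfrac{k+1}{N}}\Big), \] (the normalized quantum Curie–Weiss Hamiltonian $H_N^{\mathrm{CW}}/N$ restricted to the symmetric subspace $\mathrm{Sym}^N(\mathbb{C}^2)$, written in a suitable basis). Let \[ h_0^{\mathrm{CW}}(x,\theta)=-\frac{\Gamma}{2}(2x-1)^2-2B\sqrt{(1-x)x}\,\cos\theta,\qquad x\in[0,1],\ \theta\in[-\pi,\pi]. \] Then $\{\bar H_N^{s}\}_N\sim_{\mathrm{GLT}}h_0^{\mathrm{CW}}$, $\{\bar H_N^{s}\}_N\sim_{\sigma}h_0^{\mathrm{CW}}$ and $\{\bar H_N^{s}\}_N\sim_{\lambda}h_0^{\mathrm{CW}}$.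
   Context: $\mathrm{tridiag}(\ell_k,0,u_k)$ denotes the matrix with zero main diagonal, subdiagonal entries $\ell_k$ and superdiagonal entries $u_k$ (indexed by the row/column position $k$). Distributions: for measurable $\kappa:D=[0,1]\times[-\pi,\pi]\to\mathbb{C}$, $\{A_N\}\sim_\sigma\kappa$ means $\lim_N\frac{1}{d_N}\sum_jF(\sigma_j(A_N))=\frac{1}{2\pi}\int_D F(|\kappa(x,\theta)|)\,dx\,d\theta$ for all $F\in C_c(\mathbb{R})$ ($d_N$ the size of $A_N$), and $\sim_\lambda$ is the same with eigenvalues, $F\in C_c(\mathbb{C})$ and $F(\kappa)$. $\{A_N\}\sim_{\mathrm{GLT}}\kappa$ means $\{A_N\}$ is a (unilevel, scalar) GLT sequence with symbol $\kappa$: the GLT class is the $*$-algebra of matrix-sequences generated by Toeplitz sequences $\{T_n(f)\}$, $T_n(f)=[\hat f_{i-j}]_{i,j=1}^n$ with $f\in L^1([-\pi,\pi])$ (symbol $f(\theta)$), diagonal sampling sequences $\{D_n(a)\}$, $D_n(a)=\mathrm{diag}_{i=1..n}a(i/n)$ with $a$ Riemann integrable on $[0,1]$ (symbol $a(x)$), and zero-distributed sequences (symbol $0$), closed under limits in the approximating-class-of-sequences topology, with the symbol map a $*$-homomorphism; every GLT sequence with symbol $\kappa$ satisfies $\sim_\sigma\kappa$, and $\sim_\lambda\kappa$ if its matrices are Hermitian. *)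

theory Defs
  imports "HOL-Analysis.Analysis" "Jordan_Normal_Form.Jordan_Normal_Form" "Jordan_Normal_Form.Schur_Decomposition"
    "Jordan_Normal_Form.DL_Rank"
begin

definition eig_sum :: "(complex \<Rightarrow> complex) \<Rightarrow> complex mat \<Rightarrow> complex" where
  "eig_sum F A = (\<Sum>\<mu>\<in>{\<mu>. poly (char_poly A) \<mu> = 0}.
      of_nat (Polynomial.order \<mu> (char_poly A)) * F \<mu>)"

definition sv_sum :: "(real \<Rightarrow> complex) \<Rightarrow> complex mat \<Rightarrow> complex" where
  "sv_sum F A = (\<Sum>\<mu>\<in>{\<mu>. poly (char_poly (mat_adjoint A * A)) \<mu> = 0}.
      of_nat (Polynomial.order \<mu> (char_poly (mat_adjoint A * A))) * F (sqrt (Re \<mu>)))"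

text \<open>Spectral norm = largest singular value (0 for the empty matrix).\<close>
definition spec_norm :: "complex mat \<Rightarrow> real" where
  "spec_norm A = Max ({sqrt (Re \<mu>) | \<mu>. poly (char_poly (mat_adjoint A * A)) \<mu> = 0} \<union> {0})"

definition symD :: "(real \<times> real) set" where
  "symD = {0..1} \<times> {-pi..pi}"

definition compact_supp :: "('a::real_normed_vector \<Rightarrow> complex) \<Rightarrow> bool" where
  "compact_supp F \<longleftrightarrow> continuous_on UNIV F \<and> compact (closure {x. F x \<noteq> 0})"

definition sigma_distributed :: "(nat \<Rightarrow> complex mat) \<Rightarrow> (real \<times> real \<Rightarrow> complex) \<Rightarrow> bool" where
  "sigma_distributed A \<kappa> \<longleftrightarrow>
     (\<forall>F :: real \<Rightarrow> complex. compact_supp F \<longrightarrow>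
        (\<lambda>n. sv_sum F (A n) / of_nat (dim_row (A n)))
          \<longlonglongrightarrow> integral symD (\<lambda>p. F (cmod (\<kappa> p))) / (2 * pi))"

definition lambda_distributed :: "(nat \<Rightarrow> complex mat) \<Rightarrow> (real \<times> real \<Rightarrow> complex) \<Rightarrow> bool" where
  "lambda_distributed A \<kappa> \<longleftrightarrow>
     (\<forall>F :: complex \<Rightarrow> complex. compact_supp F \<longrightarrow>
        (\<lambda>n. eig_sum F (A n) / of_nat (dim_row (A n)))
          \<longlonglongrightarrow> integral symD (\<lambda>p. F (\<kappa> p)) / (2 * pi))"

definition zero_distributed :: "(nat \<Rightarrow> complex mat) \<Rightarrow> bool" where
  "zero_distributed A \<longleftrightarrow> sigma_distributed A (\<lambda>_. 0)"

definition mseq :: "(nat \<Rightarrow> complex mat) \<Rightarrow> bool" where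
  "mseq A \<longleftrightarrow> (\<forall>n. A n \<in> carrier_mat n n)"

definition fourier_coeff :: "(real \<Rightarrow> complex) \<Rightarrow> int \<Rightarrow> complex" where
  "fourier_coeff f k = integral {-pi..pi} (\<lambda>\<theta>. f \<theta> * exp (- (\<i> * of_real (of_int k * \<theta>)))) / (2 * pi)"

definition toeplitz :: "nat \<Rightarrow> (real \<Rightarrow> complex) \<Rightarrow> complex mat" where
  "toeplitz n f = mat n n (\<lambda>(i, j). fourier_coeff f (int i - int j))"

definition diag_sample :: "nat \<Rightarrow> (real \<Rightarrow> complex) \<Rightarrow> complex mat" where
  "diag_sample n a = mat n n (\<lambda>(i, j). if i = j then a (real (Suc i) / real n) else 0)"

text \<open>Riemann integrability on [0,1]: Riemann sums over tagged divisions of mesh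
  (uniform gauge) less than delta converge.\<close>
definition riemann_integrable01 :: "(real \<Rightarrow> complex) \<Rightarrow> bool" where
  "riemann_integrable01 a \<longleftrightarrow> (\<exists>I. \<forall>e>0. \<exists>\<delta>>0. \<forall>\<D>.
      \<D> tagged_division_of {0..1} \<and> (\<lambda>x. ball x \<delta>) fine \<D> \<longrightarrow>
        norm ((\<Sum>(x, K)\<in>\<D>. Henstock_Kurzweil_Integration.content K *\<^sub>R a x) - I) < e)"

definition acs :: "(nat \<Rightarrow> nat \<Rightarrow> complex mat) \<Rightarrow> (nat \<Rightarrow> complex mat) \<Rightarrow> bool" where
  "acs Bs A \<longleftrightarrow> (\<exists>c \<omega> :: nat \<Rightarrow> real. c \<longlonglongrightarrow> 0 \<and> \<omega> \<longlonglongrightarrow> 0 \<and>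
     (\<forall>m. \<exists>nm. \<forall>n\<ge>nm. \<exists>R N. R \<in> carrier_mat n n \<and> N \<in> carrier_mat n n \<and>
        A n = Bs m n + R + N \<and> real (vec_space.rank n R) \<le> c m * real n \<and> spec_norm N \<le> \<omega> m))"

definition conv_in_measure :: "(nat \<Rightarrow> real \<times> real \<Rightarrow> complex) \<Rightarrow> (real \<times> real \<Rightarrow> complex) \<Rightarrow> bool" where
  "conv_in_measure \<kappa>s \<kappa> \<longleftrightarrow> (\<forall>\<epsilon>>0.
      (\<lambda>m. emeasure lebesgue {p \<in> symD. \<epsilon> < cmod (\<kappa>s m p - \<kappa> p)}) \<longlonglongrightarrow> 0)"

inductive GLT :: "(nat \<Rightarrow> complex mat) \<Rightarrow> (real \<times> real \<Rightarrow> complex) \<Rightarrow> bool" where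
  toeplitz: "f absolutely_integrable_on {-pi..pi} \<Longrightarrow>
     GLT (\<lambda>n. toeplitz n f) (\<lambda>(x, \<theta>). f \<theta>)"
| diag: "riemann_integrable01 a \<Longrightarrow> GLT (\<lambda>n. diag_sample n a) (\<lambda>(x, \<theta>). a x)"
| zero: "mseq Z \<Longrightarrow> zero_distributed Z \<Longrightarrow> GLT Z (\<lambda>_. 0)"
| add: "GLT A \<kappa> \<Longrightarrow> GLT B \<eta> \<Longrightarrow> GLT (\<lambda>n. A n + B n) (\<lambda>p. \<kappa> p + \<eta> p)"
| mult: "GLT A \<kappa> \<Longrightarrow> GLT B \<eta> \<Longrightarrow> GLT (\<lambda>n. A n * B n) (\<lambda>p. \<kappa> p * \<eta> p)"
| scale: "GLT A \<kappa> \<Longrightarrow> GLT (\<lambda>n. c \<cdot>\<^sub>m A n) (\<lambda>p. c * \<kappa> p)"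
| adjoint: "GLT A \<kappa> \<Longrightarrow> GLT (\<lambda>n. mat_adjoint (A n)) (\<lambda>p. cnj (\<kappa> p))"
| limit: "(\<And>m. GLT (Bs m) (\<kappa>s m)) \<Longrightarrow> mseq A \<Longrightarrow> acs Bs A \<Longrightarrow>
     (\<And>m. \<kappa>s m \<in> borel_measurable (lebesgue_on symD)) \<Longrightarrow>
     \<kappa> \<in> borel_measurable (lebesgue_on symD) \<Longrightarrow>
     conv_in_measure \<kappa>s \<kappa> \<Longrightarrow> GLT A \<kappa>"

text \<open>The (N+1)x(N+1) matrix, 0-based index i = k - 1; entry (k,k-1) is l_k, entry (k,k+1) is u_k.\<close>
definition Hbar :: "real \<Rightarrow> real \<Rightarrow> nat \<Rightarrow> real mat" where
  "Hbar \<Gamma> B N = mat (N + 1) (N + 1) (\<lambda>(i, j).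
     (let k = real (Suc i) in
      if j = i then - \<Gamma> / 2 * (2 * k / real N - 1)\<^sup>2
      else if j + 1 = i then - B * sqrt (1 - (k - 1) / real N) * sqrt (k / real N)
      else if j = i + 1 then - B * sqrt (1 - k / real N) * sqrt ((k + 1) / real N)
      else 0))"

definition h0CW :: "real \<Rightarrow> real \<Rightarrow> real \<times> real \<Rightarrow> complex" where
  "h0CW \<Gamma> B = (\<lambda>(x, \<theta>). complex_of_real
     (- \<Gamma> / 2 * (2 * x - 1)\<^sup>2 - 2 * B * sqrt ((1 - x) * x) * cos \<theta>))"

end

theory Submission
  imports Defs
begin

definition mtr :: "complex mat \<Rightarrow> complex" where
  "mtr A = (\<Sum>i<dim_row A. A $$ (i,i))"

lemma mult_entry:
  assumes "A \<in> carrier_mat n n" "B \<in> carrier_mat n n" "i < n" "j < n"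
  shows "(A * B) $$ (i,j) = (\<Sum>l<n. A $$ (i,l) * B $$ (l,j))"
  using assms by (auto simp: scalar_prod_def atLeast0LessThan intro!: sum.cong)

lemma mtr_comm:
  assumes "A \<in> carrier_mat n n" "B \<in> carrier_mat n n"
  shows "mtr (A * B) = mtr (B * A)"
proof -
  have "mtr (A * B) = (\<Sum>i<n. \<Sum>l<n. A $$ (i,l) * B $$ (l,i))"
    unfolding mtr_def using assms by (auto simp: mult_entry[OF assms] simp del: index_mult_mat(1) intro!: sum.cong)
  also have "\<dots> = (\<Sum>l<n. \<Sum>i<n. B $$ (l,i) * A $$ (i,l))"
    by (subst sum.swap) (simp add: mult.commute)
  also have "\<dots> = mtr (B * A)"
    unfolding mtr_def using assms by (auto simp: mult_entry[OF assms(2,1)] simp del: index_mult_mat(1) intro!: sum.cong)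
  finally show ?thesis .
qed

lemma ut_mult:
  fixes A B :: "'a::comm_ring_1 mat"
  assumes A: "A \<in> carrier_mat n n" and B: "B \<in> carrier_mat n n"
    and uA: "upper_triangular A" and uB: "upper_triangular B"
  shows "upper_triangular (A * B)" "\<And>i. i < n \<Longrightarrow> (A * B) $$ (i,i) = A $$ (i,i) * B $$ (i,i)"
proof -
  have e: "(A * B) $$ (i,j) = (\<Sum>l<n. A $$ (i,l) * B $$ (l,j))" if "i < n" "j < n" for i j
    using A B that by (auto simp: scalar_prod_def atLeast0LessThan intro!: sum.cong)
  have zA: "A $$ (i,l) = 0" if "l < i" "i < n" for i l using uA A that unfolding upper_triangular_def by auto
  have zB: "B $$ (l,j) = 0" if "j < l" "l < n" for j l using uB B that unfolding upper_triangular_def by auto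
  show "upper_triangular (A * B)"
    unfolding upper_triangular_def
  proof (intro allI impI)
    fix i j assume i: "i < dim_row (A * B)" and j: "j < i"
    have "(A * B) $$ (i,j) = (\<Sum>l<n. A $$ (i,l) * B $$ (l,j))" using i j A by (intro e) auto
    also have "\<dots> = 0"
    proof (intro sum.neutral ballI)
      fix l assume l: "l \<in> {..<n}"
      show "A $$ (i, l) * B $$ (l, j) = 0"
      proof (cases "l < i")
        case True then show ?thesis using zA i A by auto
      next
        case False then show ?thesis using zB[of j l] j l by auto
      qed
    qed
    finally show "(A * B) $$ (i,j) = 0" .
  qed
  fix i assume i: "i < n"
  have "(A * B) $$ (i,i) = (\<Sum>l<n. A $$ (i,l) * B $$ (l,i))" using i by (intro e) auto
  also have "\<dots> = (\<Sum>l\<in>{i}. A $$ (i,l) * B $$ (l,i))"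
  proof (rule sum.mono_neutral_right)
    show "\<forall>l\<in>{..<n} - {i}. A $$ (i, l) * B $$ (l, i) = 0"
    proof
      fix l assume l: "l \<in> {..<n} - {i}"
      show "A $$ (i, l) * B $$ (l, i) = 0"
      proof (cases "l < i")
        case True then show ?thesis using zA i by auto
      next
        case False then show ?thesis using zB[of i l] l by auto
      qed
    qed
  qed (use i in auto)
  finally show "(A * B) $$ (i,i) = A $$ (i,i) * B $$ (i,i)" by simp
qed

lemma ut_pow:
  fixes B :: "'a::comm_ring_1 mat"
  assumes B: "B \<in> carrier_mat n n" and uB: "upper_triangular B"
  shows "upper_triangular (B ^\<^sub>m k) \<and> (\<forall>i<n. (B ^\<^sub>m k) $$ (i,i) = B $$ (i,i) ^ k)"
proof (induct k)
  case 0
  then show ?case using B by auto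
next
  case (Suc k)
  have Bk: "B ^\<^sub>m k \<in> carrier_mat n n" using B by simp
  show ?case using ut_mult[OF Bk B] Suc uB by (simp add: mult.commute)
qed

lemma sum_list_count_gen:
  fixes f :: "'b \<Rightarrow> 'a::semiring_1"
  shows "sum_list (map f xs) = (\<Sum>x\<in>set xs. of_nat (count_list xs x) * f x)"
proof (induction xs)
  case Nil then show ?case by simp
next
  case (Cons x xs)
  show ?case
  proof (cases "x \<in> set xs")
    case True
    have "(\<Sum>y\<in>set (x#xs). of_nat (count_list (x#xs) y) * f y) = (\<Sum>y\<in>set xs. (if y = x then f x else 0) + of_nat (count_list xs y) * f y)"
      using True by (intro sum.cong) (auto simp: distrib_right)
    also have "\<dots> = f x + (\<Sum>y\<in>set xs. of_nat (count_list xs y) * f y)"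
      using True by (simp add: sum.distrib)
    also have "\<dots> = sum_list (map f (x#xs))" using Cons.IH by simp
    finally show ?thesis by simp
  next
    case False
    hence "\<And>y. y \<in> set xs \<Longrightarrow> x \<noteq> y" by blast
    thus ?thesis using False by (simp add: Cons.IH)
  qed
qed

lemma eig_sum_prod:
  assumes "char_poly A = (\<Prod>e\<leftarrow>es. [:- e, 1:])"
  shows "eig_sum F A = sum_list (map F es)"
proof -
  have roots: "{\<mu>. poly (char_poly A) \<mu> = 0} = set es"
    unfolding assms poly_prod_list_zero_iff by auto
  have ord: "Polynomial.order \<mu> (\<Prod>e\<leftarrow>es. [:- e, 1:]) = count_list es \<mu>" for \<mu>
  proof (induct es)
    case Nil then show ?case by (simp add: order_0I)
  next
    case (Cons a es)
    have "(0::complex poly) \<notin> set (map (\<lambda>e. [:- e, 1:]) (a#es))" by auto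
    then have nz: "[:- a, 1:] * (\<Prod>e\<leftarrow>es. [:- e, 1:]) \<noteq> (0::complex poly)"
      using prod_list_zero_iff[of "map (\<lambda>e. [:- e, 1:]) (a#es)"] by simp
    have "Polynomial.order \<mu> (\<Prod>e\<leftarrow>a#es. [:- e, 1:]) = Polynomial.order \<mu> [:- a, 1:] + Polynomial.order \<mu> (\<Prod>e\<leftarrow>es. [:- e, 1:])"
      by (simp only: list.map prod_list.Cons order_mult[OF nz])
    then show ?case using Cons by (simp add: order_linear')
  qed
  show ?thesis unfolding eig_sum_def roots unfolding assms ord sum_list_count_gen by simp
qed

lemma sv_sum_prod:
  assumes "char_poly (mat_adjoint A * A) = (\<Prod>e\<leftarrow>es. [:- e, 1:])"
  shows "sv_sum F A = sum_list (map (\<lambda>e. F (sqrt (Re e))) es)"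
proof -
  have "sv_sum F A = eig_sum (\<lambda>e. F (sqrt (Re e))) (mat_adjoint A * A)"
    unfolding sv_sum_def eig_sum_def by simp
  then show ?thesis using eig_sum_prod[OF assms] by simp
qed

lemma spec_decomp:
  fixes A :: "complex mat"
  assumes A: "A \<in> carrier_mat n n"
  shows "\<exists>es. length es = n \<and> (\<forall>k. char_poly (A ^\<^sub>m k) = (\<Prod>e\<leftarrow>es. [:- (e ^ k), 1:])
     \<and> mtr (A ^\<^sub>m k) = sum_list (map (\<lambda>e. e ^ k) es))"
proof -
  obtain es where cp: "char_poly A = (\<Prod>a\<leftarrow>es. [:- a, 1:])" and len: "length es = n"
    using char_poly_factorized[OF A] by blast
  obtain B P Q where sd: "schur_decomposition A es = (B,P,Q)" by (cases "schur_decomposition A es") auto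
  from schur_decomposition[OF A cp sd] have wit: "similar_mat_wit A B P Q"
    and ut: "upper_triangular B" and dg: "diag_mat B = es" by auto
  from similar_mat_witD2[OF A wit] have B: "B \<in> carrier_mat n n" and P: "P \<in> carrier_mat n n"
    and Q: "Q \<in> carrier_mat n n" and QP: "Q * P = 1\<^sub>m n" by auto
  show ?thesis
  proof (intro exI conjI allI)
    fix k
    have wk: "similar_mat_wit (A ^\<^sub>m k) (B ^\<^sub>m k) P Q" by (rule similar_mat_wit_pow[OF wit])
    have Bk: "B ^\<^sub>m k \<in> carrier_mat n n" using B by simp
    have utk: "upper_triangular (B ^\<^sub>m k)" and dk: "\<And>i. i < n \<Longrightarrow> (B ^\<^sub>m k) $$ (i,i) = B $$ (i,i) ^ k"
      using ut_pow[OF B ut, of k] by auto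
    have dgk: "diag_mat (B ^\<^sub>m k) = map (\<lambda>e. e ^ k) es"
      unfolding dg[symmetric] diag_mat_def using Bk B dk by auto
    have "char_poly (A ^\<^sub>m k) = char_poly (B ^\<^sub>m k)"
      by (rule char_poly_similar) (use wk similar_mat_def in blast)
    also have "\<dots> = (\<Prod>a\<leftarrow>diag_mat (B ^\<^sub>m k). [:- a, 1:])"
      by (rule char_poly_upper_triangular[OF Bk utk])
    finally show "char_poly (A ^\<^sub>m k) = (\<Prod>e\<leftarrow>es. [:- (e ^ k), 1:])" unfolding dgk by (simp add: o_def)
    have "A ^\<^sub>m k = P * B ^\<^sub>m k * Q" by (rule similar_mat_wit_pow_id[OF wit])
    then have "mtr (A ^\<^sub>m k) = mtr (P * (B ^\<^sub>m k * Q))" using P Bk Q by (simp add: assoc_mult_mat[of _ n n _ n _ n])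
    also have "\<dots> = mtr ((B ^\<^sub>m k * Q) * P)" using P Bk Q by (intro mtr_comm[of _ n]) auto
    also have "\<dots> = mtr (B ^\<^sub>m k * (Q * P))" using P Bk Q by (simp add: assoc_mult_mat[of _ n n _ n _ n])
    also have "\<dots> = mtr (B ^\<^sub>m k)" using right_mult_one_mat[OF Bk] QP by simp
    also have "\<dots> = (\<Sum>i<n. B $$ (i,i) ^ k)" unfolding mtr_def using Bk dk by auto
    also have "\<dots> = sum_list (map (\<lambda>e. e ^ k) es)"
      unfolding dg[symmetric] diag_mat_def using B by (simp add: sum_list_sum_nth atLeast0LessThan)
    finally show "mtr (A ^\<^sub>m k) = sum_list (map (\<lambda>e. e ^ k) es)" .
  qed (rule len)
qed

lemma eigvec_exists:
  fixes A :: "complex mat"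
  assumes A: "A \<in> carrier_mat n n" and r: "poly (char_poly A) \<mu> = 0"
  shows "\<exists>v::complex vec. v \<in> carrier_vec n \<and> (\<exists>i<n. v $ i \<noteq> 0) \<and>
           (\<forall>i<n. (\<Sum>j<n. A $$ (i,j) * v $ j) = \<mu> * v $ i)"
proof -
  from r eigenvalue_root_char_poly[OF A] obtain v where ev: "eigenvector A v \<mu>"
    unfolding eigenvalue_def by auto
  then have v: "v \<in> carrier_vec n" and nz: "v \<noteq> 0\<^sub>v n" and Av: "A *\<^sub>v v = \<mu> \<cdot>\<^sub>v v"
    unfolding eigenvector_def using A by auto
  have "\<exists>i<n. v $ i \<noteq> 0"
  proof (rule ccontr)
    assume "\<not> ?thesis"
    then have "v = 0\<^sub>v n" using v by (intro eq_vecI) auto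
    with nz show False by simp
  qed
  moreover have "(\<Sum>j<n. A $$ (i,j) * v $ j) = \<mu> * v $ i" if i: "i < n" for i
  proof -
    have "(A *\<^sub>v v) $ i = (\<mu> \<cdot>\<^sub>v v) $ i" using Av by simp
    then show ?thesis using i A v
      by (simp add: scalar_prod_def atLeast0LessThan)
  qed
  ultimately show ?thesis using v by blast
qed

lemma eig_bound:
  fixes A :: "complex mat"
  assumes A: "A \<in> carrier_mat n n" and r: "poly (char_poly A) \<mu> = 0"
    and R: "\<And>i. i < n \<Longrightarrow> (\<Sum>j<n. cmod (A $$ (i,j))) \<le> R"
  shows "cmod \<mu> \<le> R"
proof -
  obtain v :: "complex vec" where v: "v \<in> carrier_vec n" and nz: "\<exists>i<n. v $ i \<noteq> 0"
    and ev: "\<And>i. i<n \<Longrightarrow> (\<Sum>j<n. A $$ (i,j) * v $ j) = \<mu> * v $ i"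
    using eigvec_exists[OF A r] by blast
  have ne: "{..<n} \<noteq> {}" using nz by auto
  define m where "m = Max ((\<lambda>j. cmod (v $ j)) ` {..<n})"
  have "m \<in> (\<lambda>j. cmod (v $ j)) ` {..<n}" unfolding m_def using ne by (intro Max_in) auto
  then obtain i where i: "i < n" and mi: "m = cmod (v $ i)" by auto
  have le: "cmod (v $ j) \<le> m" if "j < n" for j unfolding m_def using that by (intro Max_ge) auto
  from nz obtain j where "j < n" "v $ j \<noteq> 0" by auto
  then have mpos: "m > 0" using le[of j] by (meson less_le_trans zero_less_norm_iff)
  have "cmod \<mu> * m = cmod (\<Sum>j<n. A $$ (i,j) * v $ j)" using ev[OF i] mi by (simp add: norm_mult)
  also have "\<dots> \<le> (\<Sum>j<n. cmod (A $$ (i,j)) * cmod (v $ j))"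
    by (rule order_trans[OF norm_sum]) (simp add: norm_mult)
  also have "\<dots> \<le> (\<Sum>j<n. cmod (A $$ (i,j)) * m)"
    by (intro sum_mono mult_left_mono le) auto
  also have "\<dots> = (\<Sum>j<n. cmod (A $$ (i,j))) * m" by (simp add: sum_distrib_right)
  also have "\<dots> \<le> R * m" using R[OF i] mpos by (intro mult_right_mono) auto
  finally show ?thesis using mpos by simp
qed

lemma eig_real:
  fixes A :: "complex mat"
  assumes A: "A \<in> carrier_mat n n" and r: "poly (char_poly A) \<mu> = 0"
    and H: "\<And>i j. i < n \<Longrightarrow> j < n \<Longrightarrow> A $$ (j,i) = cnj (A $$ (i,j))"
  shows "Im \<mu> = 0"
proof -
  obtain v :: "complex vec" where v: "v \<in> carrier_vec n" and nz: "\<exists>i<n. v $ i \<noteq> 0"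
    and ev: "\<And>i. i<n \<Longrightarrow> (\<Sum>j<n. A $$ (i,j) * v $ j) = \<mu> * v $ i"
    using eigvec_exists[OF A r] by blast
  define s where "s = (\<Sum>i<n. \<Sum>j<n. cnj (v $ i) * A $$ (i,j) * v $ j)"
  define S where "S = (\<Sum>i<n. (cmod (v $ i))\<^sup>2)"
  have "s = (\<Sum>i<n. cnj (v $ i) * (\<Sum>j<n. A $$ (i,j) * v $ j))"
    unfolding s_def by (simp add: sum_distrib_left mult.assoc)
  also have "\<dots> = (\<Sum>i<n. \<mu> * (cnj (v $ i) * v $ i))" by (intro sum.cong) (auto simp: ev)
  also have "\<dots> = \<mu> * of_real S" unfolding S_def
    by (simp add: sum_distrib_left of_real_sum mult.commute mult.left_commute flip: complex_norm_square of_real_power)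
  finally have s1: "s = \<mu> * of_real S" .
  have "cnj s = (\<Sum>i<n. \<Sum>j<n. v $ i * cnj (A $$ (i,j)) * cnj (v $ j))"
    unfolding s_def by (simp add: cnj_sum)
  also have "\<dots> = (\<Sum>i<n. \<Sum>j<n. v $ i * A $$ (j,i) * cnj (v $ j))"
  proof (intro sum.cong refl)
    fix i j assume "i \<in> {..<n}" "j \<in> {..<n}"
    then show "v $ i * cnj (A $$ (i,j)) * cnj (v $ j) = v $ i * A $$ (j,i) * cnj (v $ j)" using H[of i j] by simp
  qed
  also have "\<dots> = (\<Sum>j<n. \<Sum>i<n. cnj (v $ j) * A $$ (j,i) * v $ i)"
    by (subst sum.swap) (simp add: mult.commute mult.left_commute)
  also have "\<dots> = s" unfolding s_def by simp
  finally have "Im s = 0" by (metis cnj.simps(2) neg_equal_zero)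
  moreover have "S > 0"
  proof -
    from nz obtain k where k: "k < n" "v $ k \<noteq> 0" by auto
    have "(cmod (v $ k))\<^sup>2 \<le> S" unfolding S_def using k
      by (intro member_le_sum) auto
    moreover have "(cmod (v $ k))\<^sup>2 > 0" using k by simp
    ultimately show ?thesis by linarith
  qed
  ultimately show ?thesis using s1 by simp
qed

fun qq :: "real \<Rightarrow> real \<Rightarrow> nat \<Rightarrow> int \<Rightarrow> real" where
  "qq a c 0 j = (if j = 0 then 1 else 0)"
| "qq a c (Suc k) j = a * qq a c k j + c * qq a c k (j - 1) + c * qq a c k (j + 1)"

definition EE :: "int \<Rightarrow> real \<Rightarrow> complex" where
  "EE m t = exp (\<i> * of_real (of_int m * t))"

lemma EE_mult: "EE a t * EE b t = EE (a + b) t"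
  unfolding EE_def by (simp add: exp_add[symmetric] distrib_left distrib_right)

lemma cont_EE: "continuous_on S (EE m)"
  unfolding EE_def by (intro continuous_intros)

lemma EE_deriv:
  assumes "m \<noteq> 0"
  shows "((\<lambda>t. EE m t / (\<i> * of_int m)) has_vector_derivative EE m t) (at t within S)"
proof -
  define f where "f = (\<lambda>z::complex. exp (\<i> * of_int m * z) / (\<i> * of_int m))"
  have "(f has_field_derivative (exp (\<i> * of_int m * of_real t) * (\<i> * of_int m) / (\<i> * of_int m))) (at (of_real t))"
    unfolding f_def by (auto intro!: derivative_eq_intros)
  then have "((\<lambda>x. f (of_real x)) has_vector_derivative (exp (\<i> * of_int m * of_real t) * (\<i> * of_int m) / (\<i> * of_int m))) (at t within S)"
    by (rule has_vector_derivative_real_field)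
  then show ?thesis using assms unfolding EE_def f_def by (simp add: mult.assoc)
qed

lemma int_EE: "integral {-pi..pi} (EE m) = (if m = 0 then of_real (2 * pi) else 0)"
proof (cases "m = 0")
  case True
  then have "EE m = (\<lambda>_. 1)" unfolding EE_def by auto
  then show ?thesis using True by (simp add: scaleR_conv_of_real)
next
  case False
  have "(EE m has_integral (EE m pi / (\<i> * of_int m) - EE m (-pi) / (\<i> * of_int m))) {-pi..pi}"
    by (rule fundamental_theorem_of_calculus) (use EE_deriv[OF False] in auto)
  moreover have "EE m pi = EE m (-pi)"
  proof -
    have "EE m pi = exp (\<i> * of_real (of_int m * (-pi)) + \<i> * (of_int m * (of_real pi * 2)))"
      unfolding EE_def by (simp add: algebra_simps)
    also have "\<dots> = EE m (-pi)" unfolding EE_def by (rule exp_plus_2pin)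
    finally show ?thesis .
  qed
  ultimately show ?thesis using False by (simp add: integral_unique)
qed

lemma cos_EE: "complex_of_real (2 * cos t) = EE 1 t + EE (-1) t"
  unfolding EE_def by (simp add: cos_exp_eq cos_of_real[symmetric])

lemma EE_sh: "EE 1 t * EE (-j) t = EE (-(j-1)) t" "EE (-1) t * EE (-j) t = EE (-(j+1)) t"
  by (simp only: EE_mult, rule arg_cong[where f="\<lambda>m. EE m t"], simp)+

definition JJ :: "real \<Rightarrow> real \<Rightarrow> nat \<Rightarrow> int \<Rightarrow> complex" where
  "JJ a c k j = integral {-pi..pi} (\<lambda>t. (complex_of_real (a + 2 * c * cos t)) ^ k * EE (-j) t)"

lemma JJ_eq: "JJ a c k j = of_real (2 * pi * qq a c k j)"
proof (induct k arbitrary: j)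
  case 0
  then show ?case unfolding JJ_def using int_EE[of "-j"] by simp
next
  case (Suc k)
  let ?X = "\<lambda>t. (complex_of_real (a + 2 * c * cos t)) ^ k"
  have cX: "continuous_on {-pi..pi} ?X" by (intro continuous_intros)
  have int: "(\<lambda>t. ?X t * EE m t) integrable_on {-pi..pi}" for m
    by (intro integrable_continuous_interval continuous_intros cont_EE)
  have eq: "(complex_of_real (a + 2 * c * cos t)) ^ Suc k * EE (-j) t =
      of_real a * (?X t * EE (-j) t) + of_real c * (?X t * EE (-(j-1)) t) + of_real c * (?X t * EE (-(j+1)) t)" for t
  proof -
    have "complex_of_real (a + 2 * c * cos t) = of_real a + of_real c * (EE 1 t + EE (-1) t)"
      using cos_EE[of t] by (simp add: mult.assoc)
    then have "(complex_of_real (a + 2 * c * cos t)) ^ Suc k * EE (-j) t =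
       ?X t * (of_real a * EE (-j) t + of_real c * (EE 1 t * EE (-j) t) + of_real c * (EE (-1) t * EE (-j) t))"
      by (simp add: algebra_simps)
    also have "\<dots> = ?X t * (of_real a * EE (-j) t + of_real c * EE (-(j-1)) t + of_real c * EE (-(j+1)) t)"
      using EE_sh by simp
    finally show ?thesis by (simp add: algebra_simps)
  qed
  have hi: "((\<lambda>t. ?X t * EE (-m) t) has_integral JJ a c k m) {-pi..pi}" for m
    unfolding JJ_def using integrable_integral[OF int[of "-m"]] by simp
  have "((\<lambda>t. of_real a * (?X t * EE (-j) t) + of_real c * (?X t * EE (-(j-1)) t) + of_real c * (?X t * EE (-(j+1)) t))
      has_integral (of_real a * JJ a c k j + of_real c * JJ a c k (j-1) + of_real c * JJ a c k (j+1))) {-pi..pi}"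
    by (intro has_integral_add has_integral_mult_right hi)
  then have "JJ a c (Suc k) j = of_real a * JJ a c k j + of_real c * JJ a c k (j-1) + of_real c * JJ a c k (j+1)"
    unfolding JJ_def eq by (rule integral_unique)
  then show ?case using Suc by (simp add: algebra_simps)
qed

lemma qq_zero: "k < \<bar>j\<bar> \<Longrightarrow> qq a c k j = 0"
proof (induct k arbitrary: j)
  case 0 then show ?case by simp
next
  case (Suc k) then show ?case by simp
qed

lemma qq_bound:
  assumes "\<bar>a\<bar> \<le> K" "\<bar>c\<bar> \<le> K"
  shows "\<bar>qq a c k j\<bar> \<le> (3 * K) ^ k"
proof (induct k arbitrary: j)
  case 0 then show ?case by simp
next
  case (Suc k)
  have "\<bar>qq a c (Suc k) j\<bar> \<le> \<bar>a\<bar> * \<bar>qq a c k j\<bar> + \<bar>c\<bar> * \<bar>qq a c k (j-1)\<bar> + \<bar>c\<bar> * \<bar>qq a c k (j+1)\<bar>"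
    by (simp add: abs_mult[symmetric]) (rule order_trans[OF abs_triangle_ineq], simp add: abs_triangle_ineq)?
  also have "\<dots> \<le> K * (3 * K) ^ k + K * (3 * K) ^ k + K * (3 * K) ^ k"
    using assms Suc by (intro add_mono mult_mono) auto
  finally show ?case by (simp add: mult_ac)
qed

lemma qq_cont:
  assumes "continuous_on S g" "continuous_on S h"
  shows "continuous_on S (\<lambda>x. qq (g x) (h x) k j)"
proof (induct k arbitrary: j)
  case 0 then show ?case by simp
next
  case (Suc k) then show ?case by (simp, intro continuous_intros assms)
qed

definition tri :: "(nat \<Rightarrow> real) \<Rightarrow> (nat \<Rightarrow> real) \<Rightarrow> nat \<Rightarrow> nat \<Rightarrow> real" where
  "tri d e m l = (if m = l then d l else if m + 1 = l then e m else if m = l + 1 then e l else 0)"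

fun PP :: "nat \<Rightarrow> (nat \<Rightarrow> real) \<Rightarrow> (nat \<Rightarrow> real) \<Rightarrow> nat \<Rightarrow> nat \<Rightarrow> nat \<Rightarrow> real" where
  "PP n d e 0 i l = (if i = l then 1 else 0)"
| "PP n d e (Suc k) i l = (\<Sum>m<n. PP n d e k i m * tri d e m l)"

lemma tri_sum:
  assumes "l < n"
  shows "(\<Sum>m<n. f m * tri d e m l) = f l * d l + (if 0 < l then f (l-1) * e (l-1) else 0)
           + (if l + 1 < n then f (l+1) * e l else 0)"
proof -
  have "(\<Sum>m<n. f m * tri d e m l) = (\<Sum>m<n. (if m = l then f l * d l else 0)
     + (if m = l - 1 \<and> 0 < l then f (l-1) * e (l-1) else 0) + (if m = l + 1 then f (l+1) * e l else 0))"
    by (intro sum.cong) (auto simp: tri_def)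
  also have "\<dots> = f l * d l + (if 0 < l then f (l-1) * e (l-1) else 0)
           + (if l + 1 < n then f (l+1) * e l else 0)"
    using assms by (simp add: sum.distrib sum.delta' conj_commute)
  finally show ?thesis .
qed

lemma PP_band: "i + k < l \<or> l + k < i \<Longrightarrow> PP n d e k i l = 0"
proof (induct k arbitrary: l)
  case 0 then show ?case by auto
next
  case (Suc k)
  show ?case unfolding PP.simps
  proof (intro sum.neutral ballI)
    fix m assume "m \<in> {..<n}"
    show "PP n d e k i m * tri d e m l = 0"
    proof (cases "m = l \<or> m + 1 = l \<or> m = l + 1")
      case True
      then have "i + k < m \<or> m + k < i" using Suc.prems by auto
      then show ?thesis using Suc.hyps by simp
    next
      case False then show ?thesis by (simp add: tri_def)
    qed
  qed
qed

lemma PP_bound: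
  assumes K: "0 \<le> K" and de: "\<And>j. j < n \<Longrightarrow> \<bar>d j\<bar> \<le> K \<and> \<bar>e j\<bar> \<le> K"
  shows "l < n \<Longrightarrow> \<bar>PP n d e k i l\<bar> \<le> (3 * K) ^ k"
proof (induct k arbitrary: l)
  case 0 then show ?case by simp
next
  case (Suc k)
  have b1: "\<bar>PP n d e k i l * d l\<bar> \<le> (3 * K) ^ k * K"
    unfolding abs_mult using Suc de K by (intro mult_mono) auto
  have b2: "\<bar>(if 0 < l then PP n d e k i (l-1) * e (l-1) else 0)\<bar> \<le> (3 * K) ^ k * K"
    using Suc de[of "l-1"] K by (auto simp: abs_mult intro!: mult_mono)
  have b3: "\<bar>(if l + 1 < n then PP n d e k i (l+1) * e l else 0)\<bar> \<le> (3 * K) ^ k * K"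
    using Suc.hyps[of "l+1"] de[of l] K Suc.prems by (auto simp: abs_mult intro!: mult_mono)
  have "\<bar>PP n d e (Suc k) i l\<bar> \<le> (3 * K) ^ k * K + (3 * K) ^ k * K + (3 * K) ^ k * K"
    unfolding PP.simps tri_sum[OF Suc.prems]
    using b1 b2 b3 by (smt (verit))
  then show ?case by (simp add: mult_ac)
qed

lemma step_bound:
  fixes x y q a :: real
  assumes "\<bar>x - q\<bar> \<le> E" "\<bar>y\<bar> \<le> K" "q \<noteq> 0 \<Longrightarrow> \<bar>y - a\<bar> \<le> \<delta>" "\<bar>q\<bar> \<le> Q" "0 \<le> \<delta>"
  shows "\<bar>x * y - a * q\<bar> \<le> K * E + Q * \<delta>"
proof -
  have "x * y - a * q = (x - q) * y + q * (y - a)" by (simp add: algebra_simps)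
  also have "\<bar>\<dots>\<bar> \<le> \<bar>x - q\<bar> * \<bar>y\<bar> + \<bar>q\<bar> * \<bar>y - a\<bar>" by (metis abs_mult abs_triangle_ineq)
  also have "\<bar>x - q\<bar> * \<bar>y\<bar> \<le> K * E"
  proof -
    have "0 \<le> E" using assms(1) abs_ge_zero order_trans by blast
    then have "\<bar>x - q\<bar> * \<bar>y\<bar> \<le> E * K" using assms(1,2) by (intro mult_mono) auto
    then show ?thesis by (simp add: mult.commute)
  qed
  also have "\<bar>q\<bar> * \<bar>y - a\<bar> \<le> Q * \<delta>"
  proof (cases "q = 0")
    case True then show ?thesis using assms by simp
  next
    case False then show ?thesis using assms by (intro mult_mono) auto
  qed
  finally show ?thesis by simp
qed

lemma PP_approx:
  assumes K: "1 \<le> K" and i: "K0 \<le> i" "i + K0 < n" and ac: "\<bar>a\<bar> \<le> K" "\<bar>c\<bar> \<le> K"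
    and de: "\<And>j. j < n \<Longrightarrow> \<bar>d j\<bar> \<le> K \<and> \<bar>e j\<bar> \<le> K"
    and win: "\<And>j. j < n \<Longrightarrow> i \<le> j + K0 \<Longrightarrow> j \<le> i + K0 \<Longrightarrow> \<bar>d j - a\<bar> \<le> \<delta> \<and> \<bar>e j - c\<bar> \<le> \<delta>"
  shows "k \<le> K0 \<Longrightarrow> l < n \<Longrightarrow> \<bar>PP n d e k i l - qq a c k (int l - int i)\<bar> \<le> real k * (3 * K) ^ k * \<delta>"
proof (induct k arbitrary: l)
  case 0 then show ?case by simp
next
  case (Suc k)
  have dpos: "0 \<le> \<delta>" using win[of i] i by (auto intro: order_trans[OF abs_ge_zero])
  have kK: "k < K0" using Suc by simp
  define err where "err = real k * (3 * K) ^ k * \<delta>"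
  define Q where "Q = (3 * K) ^ k"
  have qb: "\<bar>qq a c k j\<bar> \<le> Q" for j unfolding Q_def using qq_bound ac by blast
  let ?q = "\<lambda>j. qq a c k j"
  let ?lj = "int l - int i"
  have T1: "\<bar>PP n d e k i l * d l - a * ?q ?lj\<bar> \<le> K * err + Q * \<delta>"
  proof (rule step_bound[OF _ _ _ qb dpos])
    show "\<bar>PP n d e k i l - ?q ?lj\<bar> \<le> err" unfolding err_def using Suc kK by simp
    show "\<bar>d l\<bar> \<le> K" using de Suc by simp
    assume "?q ?lj \<noteq> 0"
    then have "\<bar>?lj\<bar> \<le> int k" using qq_zero by force
    then show "\<bar>d l - a\<bar> \<le> \<delta>" using win[of l] Suc kK by auto
  qed
  have T2: "\<bar>(if 0 < l then PP n d e k i (l-1) * e (l-1) else 0) - c * ?q (?lj - 1)\<bar> \<le> K * err + Q * \<delta>"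
  proof (cases "0 < l")
    case True
    have e: "int (l-1) - int i = ?lj - 1" using True by simp
    have "\<bar>PP n d e k i (l-1) * e (l-1) - c * ?q (?lj - 1)\<bar> \<le> K * err + Q * \<delta>"
    proof (rule step_bound[OF _ _ _ qb dpos])
      show "\<bar>PP n d e k i (l-1) - ?q (?lj - 1)\<bar> \<le> err"
        using Suc.hyps[of "l-1"] kK Suc.prems unfolding e err_def by simp
      show "\<bar>e (l-1)\<bar> \<le> K" using de Suc by simp
      assume "?q (?lj - 1) \<noteq> 0"
      then have "\<bar>?lj - 1\<bar> \<le> int k" using qq_zero by force
      then show "\<bar>e (l-1) - c\<bar> \<le> \<delta>" using win[of "l-1"] Suc kK True by auto
    qed
    then show ?thesis using True by simp
  next
    case False
    then have "?q (?lj - 1) = 0" using kK i by (intro qq_zero) auto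
    then show ?thesis using False dpos K by (simp add: err_def Q_def)
  qed
  have T3: "\<bar>(if l + 1 < n then PP n d e k i (l+1) * e l else 0) - c * ?q (?lj + 1)\<bar> \<le> K * err + Q * \<delta>"
  proof (cases "l + 1 < n")
    case True
    have e: "int (l+1) - int i = ?lj + 1" by simp
    have "\<bar>PP n d e k i (l+1) * e l - c * ?q (int (l+1) - int i)\<bar> \<le> K * err + Q * \<delta>"
    proof (rule step_bound[OF _ _ _ qb dpos])
      show "\<bar>PP n d e k i (l+1) - ?q (int (l+1) - int i)\<bar> \<le> err"
        using Suc.hyps[OF less_imp_le[OF kK] True] unfolding err_def .
      show "\<bar>e l\<bar> \<le> K" using de Suc by simp
      assume "?q (int (l+1) - int i) \<noteq> 0"
      then have "\<bar>int (l+1) - int i\<bar> \<le> int k" using qq_zero by force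
      then show "\<bar>e l - c\<bar> \<le> \<delta>" using win[of l] Suc kK by auto
    qed
    then show ?thesis using True unfolding e by simp
  next
    case False
    then have "?q (?lj + 1) = 0" using kK i Suc by (intro qq_zero) auto
    then show ?thesis using False dpos K by (simp add: err_def Q_def)
  qed
  have "\<bar>PP n d e (Suc k) i l - qq a c (Suc k) ?lj\<bar> \<le> 3 * (K * err + Q * \<delta>)"
    unfolding PP.simps tri_sum[OF Suc.prems(2)] qq.simps
    using T1 T2 T3 by (smt (verit))
  also have "\<dots> \<le> real (Suc k) * (3 * K) ^ Suc k * \<delta>"
  proof -
    have "3 * (K * err + Q * \<delta>) = real k * (3 * K) ^ Suc k * \<delta> + 3 * Q * \<delta>"
      unfolding err_def Q_def by (simp add: algebra_simps)
    also have "3 * Q * \<delta> \<le> (3 * K) ^ Suc k * \<delta>"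
      unfolding Q_def using K dpos by (intro mult_right_mono) (auto simp: mult_ac)
    finally show ?thesis by (simp add: algebra_simps)
  qed
  finally show ?case .
qed

lemma integral_split_pieces:
  fixes f :: "real \<Rightarrow> real"
  assumes cf: "continuous_on UNIV f" and n: "0 < n"
  shows "m \<le> n \<Longrightarrow> integral {0..real m / real n} f = (\<Sum>i<m. integral {real i / real n..real (Suc i) / real n} f)"
proof (induct m)
  case 0 then show ?case by simp
next
  case (Suc m)
  have "integral {0..real m / real n} f + integral {real m / real n..real (Suc m) / real n} f
      = integral {0..real (Suc m) / real n} f"
  proof (rule Henstock_Kurzweil_Integration.integral_combine)
    show "0 \<le> real m / real n" by simp
    show "real m / real n \<le> real (Suc m) / real n" by (simp add: divide_right_mono)
    show "f integrable_on {0..real (Suc m) / real n}"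
      by (intro integrable_continuous_interval continuous_on_subset[OF cf]) auto
  qed
  then show ?case using Suc by simp
qed

lemma riemann_shift:
  fixes f :: "real \<Rightarrow> real"
  assumes cf: "continuous_on UNIV f"
  shows "(\<lambda>N. (\<Sum>i<N+1. f (real (i+1) / real N)) / real (N+1)) \<longlonglongrightarrow> integral {0..1} f"
proof (rule LIMSEQ_I)
  fix r :: real assume r: "0 < r"
  have "uniformly_continuous_on {0..2} f"
    by (rule compact_uniformly_continuous) (auto intro: continuous_on_subset[OF cf])
  then obtain \<eta> where eta: "\<eta> > 0" and uc: "\<And>x y. x \<in> {0..2} \<Longrightarrow> y \<in> {0..2} \<Longrightarrow> dist y x < \<eta> \<Longrightarrow> dist (f y) (f x) < r / 2"
    unfolding uniformly_continuous_on_def using r by (metis half_gt_zero)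
  obtain N0 :: nat where N0: "2 / \<eta> < N0" using reals_Archimedean2 by blast
  show "\<exists>no. \<forall>N\<ge>no. norm ((\<Sum>i<N+1. f (real (i+1) / real N)) / real (N+1) - integral {0..1} f) < r"
  proof (intro exI allI impI)
    fix N assume N: "N \<ge> N0 + 1"
    define n where "n = N + 1"
    have Npos: "real N > 0" using N by simp
    have npos: "0 < n" unfolding n_def by simp
    have Neta: "2 / real N < \<eta>"
    proof -
      have "2 / \<eta> < real N" using N0 N by linarith
      then show ?thesis using eta Npos by (simp add: field_simps)
    qed
    have split: "integral {0..1} f = (\<Sum>i<n. integral {real i / real n..real (Suc i) / real n} f)"
      using integral_split_pieces[OF cf npos, of n] npos by simp
    have piece: "\<bar>f (real (i+1) / real N) / real n - integral {real i / real n..real (Suc i) / real n} f\<bar> \<le> r / 2 / real n"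
      if i: "i < n" for i
    proof -
      let ?a = "real i / real n" and ?b = "real (Suc i) / real n" and ?c = "f (real (i+1) / real N)"
      have ab: "?a \<le> ?b" by (simp add: divide_right_mono)
      have cont: "Henstock_Kurzweil_Integration.content {?a..?b} = 1 / real n" using ab npos by (simp add: diff_divide_distrib[symmetric])
      have int: "f integrable_on {?a..?b}" by (intro integrable_continuous_interval continuous_on_subset[OF cf]) auto
      have hi: "((\<lambda>t. ?c - f t) has_integral (Henstock_Kurzweil_Integration.content {?a..?b} *\<^sub>R ?c - integral {?a..?b} f)) {?a..?b}"
        by (intro has_integral_diff has_integral_const_real integrable_integral int)
      have "norm (Henstock_Kurzweil_Integration.content {?a..?b} *\<^sub>R ?c - integral {?a..?b} f) \<le> r / 2 * Henstock_Kurzweil_Integration.content {?a..?b}"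
      proof (rule has_integral_bound_real[OF _ finite.emptyI hi])
        show "0 \<le> r / 2" using r by simp
        fix t assume t: "t \<in> {?a..?b} - {}"
        have x1: "real (i+1) / real N \<in> {0..2}"
        proof -
          have "real (i+1) \<le> real n" using i by simp
          also have "\<dots> \<le> 2 * real N" unfolding n_def using N by simp
          finally show ?thesis using Npos by (simp add: field_simps)
        qed
        have tb: "t \<le> real (i+1) / real n" using t by simp
        have "real (i+1) / real n \<le> real (i+1) / real N"
          using Npos by (intro divide_left_mono) (auto simp: n_def)
        then have tle: "t \<le> real (i+1) / real N" using tb by linarith
        have t01: "t \<in> {0..2}"
        proof -
          have "0 \<le> t" using t by (auto intro: order_trans[rotated])
          moreover have "t \<le> 2" using tle x1 by auto
          ultimately show ?thesis by auto
        qed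
        have "real (i+1) / real N - t \<le> real (i+1) / real N - real i / real n" using t by simp
        also have "\<dots> \<le> 2 / real N"
        proof -
          have "real (i+1) / real N - real i / real n = (real (i+1) * real n - real i * real N) / (real N * real n)"
            using Npos npos by (simp add: field_simps)
          also have "real (i+1) * real n - real i * real N = real N + real i + 1" unfolding n_def by (simp add: algebra_simps)
          also have "(real N + real i + 1) / (real N * real n) \<le> 2 * real n / (real N * real n)"
            using i npos Npos unfolding n_def by (intro divide_right_mono) auto
          also have "\<dots> = 2 / real N" using npos by simp
          finally show ?thesis .
        qed
        finally have "dist t (real (i+1) / real N) < \<eta>" using tle Neta by (simp add: dist_real_def)
        then have "dist (f t) ?c < r / 2" using uc[OF x1 t01] by simp
        then show "norm (?c - f t) \<le> r / 2" by (simp add: dist_real_def abs_minus_commute)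
      qed
      then show ?thesis using cont by simp
    qed
    have "\<bar>(\<Sum>i<n. f (real (i+1) / real N)) / real n - integral {0..1} f\<bar>
        = \<bar>\<Sum>i<n. (f (real (i+1) / real N) / real n - integral {real i / real n..real (Suc i) / real n} f)\<bar>"
      unfolding split by (simp add: sum_subtractf sum_divide_distrib)
    also have "\<dots> \<le> (\<Sum>i<n. r / 2 / real n)" by (rule order_trans[OF sum_abs]) (intro sum_mono piece, simp)
    also have "\<dots> = r / 2" using npos by simp
    also have "\<dots> < r" using r by simp
    finally show "norm ((\<Sum>i<N+1. f (real (i+1) / real N)) / real (N+1) - integral {0..1} f) < r"
      unfolding n_def by simp
  qed
qed

definition gg :: "real \<Rightarrow> real \<Rightarrow> real" where "gg \<Gamma> x = - \<Gamma> / 2 * (2 * x - 1)\<^sup>2"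
definition cc :: "real \<Rightarrow> real \<Rightarrow> real" where "cc B x = - B * sqrt ((1 - x) * x)"
definition dN :: "real \<Rightarrow> nat \<Rightarrow> nat \<Rightarrow> real" where "dN \<Gamma> N m = gg \<Gamma> ((real m + 1) / real N)"
definition eN :: "real \<Rightarrow> nat \<Rightarrow> nat \<Rightarrow> real" where
  "eN B N m = - B * sqrt (1 - (real m + 1) / real N) * sqrt ((real m + 2) / real N)"

lemma Hbar_tri:
  assumes "i < N + 1" "l < N + 1"
  shows "Hbar \<Gamma> B N $$ (i,l) = tri (dN \<Gamma> N) (eN B N) i l"
proof -
  have a: "real (Suc i) = real i + 1" by simp
  show ?thesis using assms unfolding Hbar_def tri_def dN_def eN_def gg_def Let_def
    by (auto simp: a algebra_simps)
qed

lemma sqrt_hoelder_pos: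
  assumes "0 \<le> v" "v \<le> u"
  shows "sqrt u - sqrt v \<le> sqrt (u - v)"
proof -
  have "u \<le> (sqrt v + sqrt (u - v))\<^sup>2"
    using assms by (simp add: power2_sum real_sqrt_mult[symmetric])
  then have "sqrt u \<le> sqrt ((sqrt v + sqrt (u - v))\<^sup>2)" by (rule real_sqrt_le_mono)
  also have "\<dots> = sqrt v + sqrt (u - v)" using assms by simp
  finally have "sqrt u \<le> sqrt v + sqrt (u - v)" .
  then show ?thesis by simp
qed

lemma sqrt_hoelder: "\<bar>sqrt u - sqrt v\<bar> \<le> 2 * sqrt \<bar>u - v\<bar>"
proof -
  have pos: "\<bar>sqrt u - sqrt v\<bar> \<le> sqrt \<bar>u - v\<bar>" if "0 \<le> u" "0 \<le> v" for u v :: real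
  proof (cases "v \<le> u")
    case True then show ?thesis using sqrt_hoelder_pos[of v u] that by simp
  next
    case False then show ?thesis using sqrt_hoelder_pos[of u v] that by (simp add: abs_minus_commute)
  qed
  consider "0 \<le> u" "0 \<le> v" | "u < 0" "v < 0" | "0 \<le> u" "v < 0" | "u < 0" "0 \<le> v" by linarith
  then show ?thesis
  proof cases
    case 1 then show ?thesis using pos[of u v] by simp
  next
    case 2
    have "\<bar>sqrt u - sqrt v\<bar> = \<bar>sqrt (-u) - sqrt (-v)\<bar>" by (simp add: real_sqrt_minus abs_minus_commute)
    also have "\<dots> \<le> sqrt \<bar>u - v\<bar>" using pos[of "-u" "-v"] 2 by (simp add: abs_minus_commute)
    finally show ?thesis by simp
  next
    case 3
    have "\<bar>sqrt u - sqrt v\<bar> = sqrt u + sqrt (-v)" using 3 by (simp add: real_sqrt_minus)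
    also have "\<dots> \<le> sqrt \<bar>u - v\<bar> + sqrt \<bar>u - v\<bar>" using 3 by (intro add_mono real_sqrt_le_mono) auto
    finally show ?thesis by simp
  next
    case 4
    have "\<bar>sqrt u - sqrt v\<bar> = sqrt (-u) + sqrt v" using 4 by (simp add: real_sqrt_minus)
    also have "\<dots> \<le> sqrt \<bar>u - v\<bar> + sqrt \<bar>u - v\<bar>" using 4 by (intro add_mono real_sqrt_le_mono) auto
    finally show ?thesis by simp
  qed
qed

lemma sqrt_abs_le: "\<bar>y\<bar> \<le> c\<^sup>2 \<Longrightarrow> 0 \<le> c \<Longrightarrow> \<bar>sqrt y\<bar> \<le> c"
  by (metis real_sqrt_abs real_sqrt_le_mono real_sqrt_abs' abs_of_nonneg)

lemma gg_bound: "x \<in> {0..2} \<Longrightarrow> \<bar>gg \<Gamma> x\<bar> \<le> 5 * \<bar>\<Gamma>\<bar>"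
proof -
  assume x: "x \<in> {0..2}"
  have "(2 * x - 1)\<^sup>2 \<le> 9"
  proof -
    have "\<bar>2 * x - 1\<bar> \<le> 3" using x by auto
    then have "\<bar>2 * x - 1\<bar>\<^sup>2 \<le> 3\<^sup>2" by (intro power_mono) auto
    then show ?thesis by simp
  qed
  then have "\<bar>gg \<Gamma> x\<bar> \<le> \<bar>\<Gamma>\<bar> / 2 * 9" unfolding gg_def
    by (simp add: abs_mult mult_left_mono)
  then show ?thesis using abs_ge_zero[of \<Gamma>] by linarith
qed

lemma cc_bound: "x \<in> {0..2} \<Longrightarrow> \<bar>cc B x\<bar> \<le> 2 * \<bar>B\<bar>"
proof -
  assume x: "x \<in> {0..2}"
  have a1: "\<bar>1 - x\<bar> \<le> 1" using x by (simp only: abs_le_iff atLeastAtMost_iff) linarith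
  have "\<bar>(1 - x) * x\<bar> = \<bar>1 - x\<bar> * x" using x by (simp add: abs_mult)
  also have "\<dots> \<le> 1 * 2" using a1 x by (intro mult_mono) auto
  finally have "\<bar>(1 - x) * x\<bar> \<le> 2\<^sup>2" by simp
  then have "\<bar>sqrt ((1 - x) * x)\<bar> \<le> 2" by (rule sqrt_abs_le) simp
  then show ?thesis unfolding cc_def by (simp add: abs_mult mult_left_mono mult.commute)
qed

lemma eN_bound:
  assumes N: "1 \<le> N" and m: "m < N + 1"
  shows "\<bar>eN B N m\<bar> \<le> 2 * \<bar>B\<bar>"
proof -
  have Np: "real N \<ge> 1" using N by simp
  have y: "(real m + 1) / real N \<le> 2" using m Np by (simp add: field_simps)
  have y0: "0 \<le> (real m + 1) / real N" by simp
  have "\<bar>1 - (real m + 1) / real N\<bar> \<le> 1\<^sup>2" using y y0 by (simp only: abs_le_iff power_one) linarith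
  then have s1: "\<bar>sqrt (1 - (real m + 1) / real N)\<bar> \<le> 1"
    by (rule sqrt_abs_le) simp
  have "(real m + 2) / real N \<le> 4" using m Np by (simp add: field_simps)
  then have s2: "\<bar>sqrt ((real m + 2) / real N)\<bar> \<le> 2"
    by (intro sqrt_abs_le) auto
  have "\<bar>eN B N m\<bar> = \<bar>B\<bar> * \<bar>sqrt (1 - (real m + 1) / real N)\<bar> * \<bar>sqrt ((real m + 2) / real N)\<bar>"
    unfolding eN_def by (simp add: abs_mult)
  also have "\<dots> \<le> \<bar>B\<bar> * 1 * 2" using s1 s2 by (intro mult_mono) auto
  finally show ?thesis by simp
qed

lemma gg_lip: "x \<in> {0..2} \<Longrightarrow> y \<in> {0..2} \<Longrightarrow> \<bar>gg \<Gamma> x - gg \<Gamma> y\<bar> \<le> 6 * \<bar>\<Gamma>\<bar> * \<bar>x - y\<bar>"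
proof -
  assume x: "x \<in> {0..2}" and y: "y \<in> {0..2}"
  have "gg \<Gamma> x - gg \<Gamma> y = - \<Gamma> * (x - y) * (2 * x + 2 * y - 2)"
    unfolding gg_def by (simp add: power2_eq_square algebra_simps)
  then have "\<bar>gg \<Gamma> x - gg \<Gamma> y\<bar> = \<bar>\<Gamma>\<bar> * \<bar>x - y\<bar> * \<bar>2 * x + 2 * y - 2\<bar>" by (simp add: abs_mult)
  also have "\<dots> \<le> \<bar>\<Gamma>\<bar> * \<bar>x - y\<bar> * 6" using x y by (intro mult_left_mono) auto
  finally show ?thesis by simp
qed

lemma eN_cc:
  assumes N: "1 \<le> N" and j: "j < N + 1" and x: "x \<in> {0..2}"
  shows "\<bar>eN B N j - cc B x\<bar> \<le> 6 * \<bar>B\<bar> * sqrt (\<bar>(real j + 1) / real N - x\<bar> + 1 / real N)"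
proof -
  define y where "y = (real j + 1) / real N"
  have Np: "real N \<ge> 1" using N by simp
  have y2: "y \<in> {0..2}" unfolding y_def using j Np by (simp add: field_simps)
  have ey: "(real j + 2) / real N = y + 1 / real N" unfolding y_def using Np by (simp add: field_simps)
  have "eN B N j - cc B x = - B * (sqrt (1 - y) * (sqrt (y + 1 / real N) - sqrt x) + sqrt x * (sqrt (1 - y) - sqrt (1 - x)))"
    unfolding eN_def cc_def ey y_def[symmetric] real_sqrt_mult by (simp add: algebra_simps)
  then have "\<bar>eN B N j - cc B x\<bar> \<le> \<bar>B\<bar> * (\<bar>sqrt (1 - y)\<bar> * \<bar>sqrt (y + 1 / real N) - sqrt x\<bar> + \<bar>sqrt x\<bar> * \<bar>sqrt (1 - y) - sqrt (1 - x)\<bar>)"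
    by (simp add: abs_mult mult_left_mono abs_triangle_ineq[THEN order_trans])
  also have "\<dots> \<le> \<bar>B\<bar> * (1 * (2 * sqrt (\<bar>y - x\<bar> + 1 / real N)) + 2 * (2 * sqrt (\<bar>y - x\<bar> + 1 / real N)))"
  proof (intro mult_left_mono add_mono mult_mono)
    show "\<bar>sqrt (1 - y)\<bar> \<le> 1" by (rule sqrt_abs_le) (use y2 in auto)
    show "\<bar>sqrt x\<bar> \<le> 2" by (rule sqrt_abs_le) (use x in auto)
    have "\<bar>sqrt (y + 1 / real N) - sqrt x\<bar> \<le> 2 * sqrt \<bar>y + 1 / real N - x\<bar>" by (rule sqrt_hoelder)
    also have "\<dots> \<le> 2 * sqrt (\<bar>y - x\<bar> + 1 / real N)"
    proof -
      have "\<bar>y + 1 / real N - x\<bar> \<le> \<bar>y - x\<bar> + \<bar>1 / real N\<bar>" using abs_triangle_ineq[of "y - x" "1 / real N"] by (simp add: algebra_simps)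
      then show ?thesis by (intro mult_left_mono real_sqrt_le_mono) auto
    qed
    finally show "\<bar>sqrt (y + 1 / real N) - sqrt x\<bar> \<le> 2 * sqrt (\<bar>y - x\<bar> + 1 / real N)" .
    have "\<bar>sqrt (1 - y) - sqrt (1 - x)\<bar> \<le> 2 * sqrt \<bar>(1 - y) - (1 - x)\<bar>" by (rule sqrt_hoelder)
    also have "\<dots> \<le> 2 * sqrt (\<bar>y - x\<bar> + 1 / real N)" by (intro mult_left_mono real_sqrt_le_mono) (auto simp: abs_minus_commute)
    finally show "\<bar>sqrt (1 - y) - sqrt (1 - x)\<bar> \<le> 2 * sqrt (\<bar>y - x\<bar> + 1 / real N)" .
  qed auto
  finally show ?thesis unfolding y_def by simp
qed

lemma card_boundary: "card {i\<in>{..<n}. i < k \<or> n \<le> i + k} \<le> 2 * k"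
proof -
  have "{i\<in>{..<n}. i < k \<or> n \<le> i + k} \<subseteq> {..<k} \<union> {n - k..<n}" by auto
  then have "card {i\<in>{..<n}. i < k \<or> n \<le> i + k} \<le> card ({..<k} \<union> {n - k..<n})"
    by (intro card_mono) auto
  also have "\<dots> \<le> card {..<k} + card {n - k..<n}" by (rule card_Un_le)
  also have "\<dots> \<le> 2 * k" by simp
  finally show ?thesis .
qed

lemma row_bound:
  fixes \<Gamma> B :: real and k N i :: nat
  assumes N: "1 \<le> N" and i: "i < N + 1"
  defines "K \<equiv> 5 * \<bar>\<Gamma>\<bar> + 2 * \<bar>B\<bar> + 1"
  defines "\<delta> \<equiv> 6 * \<bar>\<Gamma>\<bar> * real k / real N + 6 * \<bar>B\<bar> * sqrt ((real k + 1) / real N)"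
  shows "\<bar>PP (N+1) (dN \<Gamma> N) (eN B N) k i i - qq (gg \<Gamma> (real (i+1) / real N)) (cc B (real (i+1) / real N)) k 0\<bar>
     \<le> real k * (3 * K) ^ k * \<delta> + (if i < k \<or> N + 1 \<le> i + k then 2 * (3 * K) ^ k else 0)"
proof -
  define n where "n = N + 1"
  define x where "x = real (i+1) / real N"
  have Np: "real N \<ge> 1" using N by simp
  have pt: "real (j+1) / real N \<in> {0..2}" if "j < n" for j
    using that Np unfolding n_def by (simp add: field_simps)
  have x2: "x \<in> {0..2}" unfolding x_def using pt[of i] i n_def by simp
  have K1: "1 \<le> K" unfolding K_def by simp
  have dpos: "0 \<le> \<delta>" unfolding \<delta>_def by simp
  have ab: "\<bar>gg \<Gamma> x\<bar> \<le> K" "\<bar>cc B x\<bar> \<le> K"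
    using gg_bound[OF x2, of \<Gamma>] cc_bound[OF x2, of B] unfolding K_def by auto
  have de: "\<bar>dN \<Gamma> N j\<bar> \<le> K \<and> \<bar>eN B N j\<bar> \<le> K" if j: "j < n" for j
  proof
    have "dN \<Gamma> N j = gg \<Gamma> (real (j+1) / real N)" unfolding dN_def by (simp add: add.commute)
    then show "\<bar>dN \<Gamma> N j\<bar> \<le> K" using gg_bound[OF pt[OF j], of \<Gamma>] unfolding K_def by simp
    show "\<bar>eN B N j\<bar> \<le> K" using eN_bound[OF N, of j B] j unfolding K_def n_def by simp
  qed
  have C: "\<bar>qq (gg \<Gamma> x) (cc B x) k 0\<bar> \<le> (3 * K) ^ k" by (rule qq_bound[OF ab])
  show ?thesis
  proof (cases "i < k \<or> N + 1 \<le> i + k")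
    case True
    have "\<bar>PP n (dN \<Gamma> N) (eN B N) k i i\<bar> \<le> (3 * K) ^ k"
      using PP_bound[of K n "dN \<Gamma> N" "eN B N" i k i] K1 de i unfolding n_def by simp
    then have "\<bar>PP n (dN \<Gamma> N) (eN B N) k i i - qq (gg \<Gamma> x) (cc B x) k 0\<bar> \<le> 2 * (3 * K) ^ k"
      using C by linarith
    moreover have "0 \<le> real k * (3 * K) ^ k * \<delta>" using K1 dpos by simp
    ultimately show ?thesis using True unfolding n_def x_def by simp
  next
    case False
    have win: "\<bar>dN \<Gamma> N j - gg \<Gamma> x\<bar> \<le> \<delta> \<and> \<bar>eN B N j - cc B x\<bar> \<le> \<delta>"
      if j: "j < n" "i \<le> j + k" "j \<le> i + k" for j
    proof -
      have yx: "\<bar>real (j+1) / real N - x\<bar> \<le> real k / real N"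
      proof -
        have "\<bar>real j - real i\<bar> \<le> real k" using j by linarith
        moreover have "real (j+1) / real N - x = (real j - real i) / real N" unfolding x_def by (simp add: diff_divide_distrib[symmetric])
        ultimately show ?thesis using Np by (simp add: abs_divide divide_right_mono)
      qed
      have "dN \<Gamma> N j = gg \<Gamma> (real (j+1) / real N)" unfolding dN_def by (simp add: add.commute)
      then have "\<bar>dN \<Gamma> N j - gg \<Gamma> x\<bar> \<le> 6 * \<bar>\<Gamma>\<bar> * \<bar>real (j+1) / real N - x\<bar>"
        using gg_lip[OF pt[OF j(1)] x2] by simp
      also have "\<dots> \<le> 6 * \<bar>\<Gamma>\<bar> * (real k / real N)" using yx by (intro mult_left_mono) auto
      also have "\<dots> \<le> \<delta>" unfolding \<delta>_def by simp
      finally have 1: "\<bar>dN \<Gamma> N j - gg \<Gamma> x\<bar> \<le> \<delta>" .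
      have "\<bar>eN B N j - cc B x\<bar> \<le> 6 * \<bar>B\<bar> * sqrt (\<bar>(real j + 1) / real N - x\<bar> + 1 / real N)"
        using eN_cc[OF N _ x2, of j B] j unfolding n_def by simp
      also have "\<dots> \<le> 6 * \<bar>B\<bar> * sqrt ((real k + 1) / real N)"
      proof (intro mult_left_mono real_sqrt_le_mono)
        have "\<bar>(real j + 1) / real N - x\<bar> \<le> real k / real N" using yx by (simp add: add.commute)
        then show "\<bar>(real j + 1) / real N - x\<bar> + 1 / real N \<le> (real k + 1) / real N"
          by (simp add: add_divide_distrib)
      qed auto
      also have "\<dots> \<le> \<delta>" unfolding \<delta>_def by simp
      finally show ?thesis using 1 by simp
    qed
    have "\<bar>PP n (dN \<Gamma> N) (eN B N) k i i - qq (gg \<Gamma> x) (cc B x) k (int i - int i)\<bar> \<le> real k * (3 * K) ^ k * \<delta>"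
      by (rule PP_approx[OF K1 _ _ ab de win]) (use False i n_def in auto)
    then show ?thesis using False unfolding n_def x_def by simp
  qed
qed

lemma cont_Q: "continuous_on UNIV (\<lambda>x. qq (gg \<Gamma> x) (cc B x) k j)"
  by (rule qq_cont) (auto simp: gg_def cc_def intro!: continuous_intros)

theorem mom_limit:
  fixes \<Gamma> B :: real and k :: nat
  shows "(\<lambda>N. (\<Sum>i<N+1. PP (N+1) (dN \<Gamma> N) (eN B N) k i i) / real (N+1))
     \<longlonglongrightarrow> integral {0..1} (\<lambda>x. qq (gg \<Gamma> x) (cc B x) k 0)"
proof -
  define K where "K = 5 * \<bar>\<Gamma>\<bar> + 2 * \<bar>B\<bar> + 1"
  define C where "C = (3 * K) ^ k"
  define \<delta> where "\<delta> = (\<lambda>N::nat. 6 * \<bar>\<Gamma>\<bar> * real k / real N + 6 * \<bar>B\<bar> * sqrt ((real k + 1) / real N))"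
  define Q where "Q = (\<lambda>x. qq (gg \<Gamma> x) (cc B x) k 0)"
  define aP where "aP = (\<lambda>N. (\<Sum>i<N+1. PP (N+1) (dN \<Gamma> N) (eN B N) k i i) / real (N+1))"
  define aQ where "aQ = (\<lambda>N. (\<Sum>i<N+1. Q (real (i+1) / real N)) / real (N+1))"
  have K1: "1 \<le> K" unfolding K_def by simp
  have C0: "0 \<le> C" unfolding C_def using K1 by simp
  have R: "aQ \<longlonglongrightarrow> integral {0..1} Q" unfolding aQ_def Q_def by (rule riemann_shift[OF cont_Q])
  have bnd: "norm (aP N - aQ N) \<le> real k * C * \<delta> N + 4 * real k * C / real (N+1)" if N: "1 \<le> N" for N
  proof -
    define n where "n = N + 1"
    define bd where "bd = (\<lambda>i. i < k \<or> N + 1 \<le> i + k)"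
    have rb: "\<bar>PP (N+1) (dN \<Gamma> N) (eN B N) k i i - Q (real (i+1) / real N)\<bar>
        \<le> real k * C * \<delta> N + (if bd i then 2 * C else 0)" if "i < n" for i
      using row_bound[OF N, of i \<Gamma> B k] that unfolding n_def Q_def C_def K_def \<delta>_def bd_def by simp
    have "\<bar>(\<Sum>i<n. PP (N+1) (dN \<Gamma> N) (eN B N) k i i) - (\<Sum>i<n. Q (real (i+1) / real N))\<bar>
        = \<bar>\<Sum>i<n. (PP (N+1) (dN \<Gamma> N) (eN B N) k i i - Q (real (i+1) / real N))\<bar>"
      by (simp add: sum_subtractf)
    also have "\<dots> \<le> (\<Sum>i<n. real k * C * \<delta> N + (if bd i then 2 * C else 0))"
      by (rule order_trans[OF sum_abs]) (intro sum_mono rb, simp)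
    also have "\<dots> = real n * (real k * C * \<delta> N) + (\<Sum>i<n. (if bd i then 2 * C else 0))"
      by (simp add: sum.distrib)
    also have "\<dots> = real n * (real k * C * \<delta> N) + real (card {i\<in>{..<n}. bd i}) * (2 * C)"
      using sum.inter_filter[of "{..<n}" "\<lambda>_. 2 * C" bd] by simp
    also have "\<dots> \<le> real n * (real k * C * \<delta> N) + real (2 * k) * (2 * C)"
    proof -
      have "card {i\<in>{..<n}. bd i} \<le> 2 * k" unfolding bd_def n_def using card_boundary[of "N+1" k] by simp
      then show ?thesis using C0 by (intro add_left_mono mult_right_mono) auto
    qed
    finally have "\<bar>(\<Sum>i<n. PP (N+1) (dN \<Gamma> N) (eN B N) k i i) - (\<Sum>i<n. Q (real (i+1) / real N))\<bar>
        \<le> real n * (real k * C * \<delta> N) + real (2 * k) * (2 * C)" .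
    then have "\<bar>(\<Sum>i<n. PP (N+1) (dN \<Gamma> N) (eN B N) k i i) - (\<Sum>i<n. Q (real (i+1) / real N))\<bar> / real n
        \<le> (real n * (real k * C * \<delta> N) + real (2 * k) * (2 * C)) / real n"
      by (intro divide_right_mono) auto
    also have "\<dots> = real k * C * \<delta> N + 4 * real k * C / real n" unfolding n_def by (simp add: field_simps)
    finally show ?thesis unfolding aP_def aQ_def n_def by (simp add: diff_divide_distrib[symmetric])
  qed
  have lim0: "(\<lambda>N. real k * C * \<delta> N + 4 * real k * C / real (N+1)) \<longlonglongrightarrow> 0"
  proof -
    have s: "(\<lambda>N. sqrt ((real k + 1) / real N)) \<longlonglongrightarrow> 0"
      using tendsto_real_sqrt[OF lim_const_over_n[of "real k + 1"]] by simp
    have t: "(\<lambda>N. 4 * real k * C / real (N+1)) \<longlonglongrightarrow> 0"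
      using LIMSEQ_Suc[OF lim_const_over_n[of "4 * real k * C"]] by simp
    have "(\<lambda>N. real k * C * \<delta> N) \<longlonglongrightarrow> real k * C * (0 + 6 * \<bar>B\<bar> * 0)"
      unfolding \<delta>_def by (intro tendsto_intros lim_const_over_n s)
    then show ?thesis using tendsto_add[OF _ t] by fastforce
  qed
  have "(\<lambda>N. aP N - aQ N) \<longlonglongrightarrow> 0"
    by (rule Lim_null_comparison[OF _ lim0]) (use bnd in \<open>auto simp: eventually_sequentially\<close>)
  then have "(\<lambda>N. (aP N - aQ N) + aQ N) \<longlonglongrightarrow> 0 + integral {0..1} Q" by (intro tendsto_add R)
  then show ?thesis unfolding aP_def[symmetric] Q_def[symmetric] by simp
qed

abbreviation HC :: "real \<Rightarrow> real \<Rightarrow> nat \<Rightarrow> complex mat" where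
  "HC \<Gamma> B N \<equiv> map_mat complex_of_real (Hbar \<Gamma> B N)"

lemma Hbar_carrier: "Hbar \<Gamma> B N \<in> carrier_mat (N+1) (N+1)"
  unfolding Hbar_def by simp

lemma HC_carrier: "HC \<Gamma> B N \<in> carrier_mat (N+1) (N+1)"
  using Hbar_carrier by simp

lemma pow_entry:
  fixes H :: "real mat"
  assumes H: "H \<in> carrier_mat n n" and He: "\<And>i l. i < n \<Longrightarrow> l < n \<Longrightarrow> H $$ (i,l) = tri d e i l"
  shows "i < n \<Longrightarrow> l < n \<Longrightarrow> (map_mat complex_of_real H ^\<^sub>m k) $$ (i,l) = of_real (PP n d e k i l)"
proof (induct k arbitrary: l)
  case 0 then show ?case using H by simp
next
  case (Suc k)
  let ?A = "map_mat complex_of_real H"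
  have A: "?A \<in> carrier_mat n n" using H by simp
  have Ak: "?A ^\<^sub>m k \<in> carrier_mat n n" using A by simp
  have "(?A ^\<^sub>m Suc k) $$ (i,l) = (?A ^\<^sub>m k * ?A) $$ (i,l)" by simp
  also have "\<dots> = (\<Sum>m<n. (?A ^\<^sub>m k) $$ (i,m) * ?A $$ (m,l))"
    by (rule mult_entry[OF Ak A Suc.prems])
  also have "\<dots> = (\<Sum>m<n. of_real (PP n d e k i m * tri d e m l))"
    using Suc H He by (intro sum.cong) auto
  also have "\<dots> = of_real (PP n d e (Suc k) i l)" by (simp add: of_real_sum)
  finally show ?case .
qed

lemma mtr_HC: "mtr (HC \<Gamma> B N ^\<^sub>m k) = of_real (\<Sum>i<N+1. PP (N+1) (dN \<Gamma> N) (eN B N) k i i)"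
proof -
  have "mtr (HC \<Gamma> B N ^\<^sub>m k) = (\<Sum>i<N+1. (HC \<Gamma> B N ^\<^sub>m k) $$ (i,i))"
    unfolding mtr_def using HC_carrier[of \<Gamma> B N] by simp
  also have "\<dots> = (\<Sum>i<N+1. of_real (PP (N+1) (dN \<Gamma> N) (eN B N) k i i))"
    by (intro sum.cong refl pow_entry[OF Hbar_carrier]) (auto intro: Hbar_tri)
  finally show ?thesis by (simp add: of_real_sum)
qed

lemma mom_limit_C:
  "(\<lambda>N. mtr (HC \<Gamma> B N ^\<^sub>m k) / of_nat (N+1)) \<longlonglongrightarrow> of_real (integral {0..1} (\<lambda>x. qq (gg \<Gamma> x) (cc B x) k 0))"
proof -
  have "(\<lambda>N. complex_of_real ((\<Sum>i<N+1. PP (N+1) (dN \<Gamma> N) (eN B N) k i i) / real (N+1)))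
     \<longlonglongrightarrow> of_real (integral {0..1} (\<lambda>x. qq (gg \<Gamma> x) (cc B x) k 0))"
    by (intro tendsto_of_real mom_limit)
  then show ?thesis unfolding mtr_HC by simp
qed

lemma symD_cbox: "symD = cbox (0, -pi) (1, pi)"
  unfolding symD_def cbox_Pair_eq by (simp only: cbox_interval)

lemma h0CW_eq: "h0CW \<Gamma> B (x, t) = complex_of_real (gg \<Gamma> x + 2 * cc B x * cos t)"
  unfolding h0CW_def gg_def cc_def by simp

lemma cont_h: "continuous_on UNIV (h0CW \<Gamma> B)"
proof -
  have e: "h0CW \<Gamma> B = (\<lambda>p. complex_of_real (gg \<Gamma> (fst p) + 2 * cc B (fst p) * cos (snd p)))"
    by (auto simp: h0CW_eq)
  have "continuous_on UNIV (\<lambda>p. complex_of_real (gg \<Gamma> (fst p) + 2 * cc B (fst p) * cos (snd p)))"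
    unfolding gg_def cc_def by (intro continuous_intros)
  then show ?thesis unfolding e .
qed

lemma integral_of_real_gen:
  fixes f :: "real \<Rightarrow> real"
  assumes "f integrable_on S"
  shows "integral S (\<lambda>x. complex_of_real (f x)) = of_real (integral S f)"
proof -
  have "((complex_of_real \<circ> f) has_integral of_real (integral S f)) S"
    by (rule has_integral_linear[OF integrable_integral[OF assms] bounded_linear_of_real])
  then show ?thesis by (simp add: o_def integral_unique)
qed

lemma moment_integral:
  "integral symD (\<lambda>p. (h0CW \<Gamma> B p) ^ k) = of_real (2 * pi * integral {0..1} (\<lambda>x. qq (gg \<Gamma> x) (cc B x) k 0))"
proof -
  have c: "continuous_on (cbox (0, -pi) (1, pi)) (\<lambda>p. (h0CW \<Gamma> B p) ^ k)"
    by (intro continuous_intros continuous_on_subset[OF cont_h]) auto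
  have "integral symD (\<lambda>p. (h0CW \<Gamma> B p) ^ k) =
      integral (cbox 0 1) (\<lambda>x. integral (cbox (-pi) pi) (\<lambda>t. (h0CW \<Gamma> B (x,t)) ^ k))"
    unfolding symD_cbox by (rule integral_prod_continuous[OF c])
  also have "\<dots> = integral {0..1} (\<lambda>x. integral {-pi..pi} (\<lambda>t. (h0CW \<Gamma> B (x,t)) ^ k))"
    by (simp only: cbox_interval)
  also have "\<dots> = integral {0..1} (\<lambda>x. complex_of_real (2 * pi * qq (gg \<Gamma> x) (cc B x) k 0))"
  proof (intro integral_cong)
    fix x
    have "integral {-pi..pi} (\<lambda>t. (h0CW \<Gamma> B (x,t)) ^ k) = JJ (gg \<Gamma> x) (cc B x) k 0"
      unfolding JJ_def h0CW_eq by (simp add: EE_def)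
    then show "integral {-pi..pi} (\<lambda>t. (h0CW \<Gamma> B (x,t)) ^ k) = complex_of_real (2 * pi * qq (gg \<Gamma> x) (cc B x) k 0)"
      using JJ_eq by simp
  qed
  also have "\<dots> = of_real (integral {0..1} (\<lambda>x. 2 * pi * qq (gg \<Gamma> x) (cc B x) k 0))"
    by (rule integral_of_real_gen)
       (intro integrable_continuous_interval continuous_intros continuous_on_subset[OF cont_Q] subset_UNIV)
  also have "\<dots> = of_real (2 * pi * integral {0..1} (\<lambda>x. qq (gg \<Gamma> x) (cc B x) k 0))"
    by simp
  finally show ?thesis .
qed

definition EV :: "real \<Rightarrow> real \<Rightarrow> nat \<Rightarrow> complex list" where
  "EV \<Gamma> B N = (SOME es. length es = N+1 \<and> (\<forall>k. char_poly (HC \<Gamma> B N ^\<^sub>m k) = (\<Prod>e\<leftarrow>es. [:- (e ^ k), 1:])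
     \<and> mtr (HC \<Gamma> B N ^\<^sub>m k) = sum_list (map (\<lambda>e. e ^ k) es)))"

lemma EV_props:
  "length (EV \<Gamma> B N) = N+1"
  "char_poly (HC \<Gamma> B N ^\<^sub>m k) = (\<Prod>e\<leftarrow>EV \<Gamma> B N. [:- (e ^ k), 1:])"
  "mtr (HC \<Gamma> B N ^\<^sub>m k) = sum_list (map (\<lambda>e. e ^ k) (EV \<Gamma> B N))"
proof -
  have "\<exists>es. length es = N+1 \<and> (\<forall>k. char_poly (HC \<Gamma> B N ^\<^sub>m k) = (\<Prod>e\<leftarrow>es. [:- (e ^ k), 1:])
     \<and> mtr (HC \<Gamma> B N ^\<^sub>m k) = sum_list (map (\<lambda>e. e ^ k) es))"
    by (rule spec_decomp[OF HC_carrier])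
  from someI_ex[OF this] show "length (EV \<Gamma> B N) = N+1"
    "char_poly (HC \<Gamma> B N ^\<^sub>m k) = (\<Prod>e\<leftarrow>EV \<Gamma> B N. [:- (e ^ k), 1:])"
    "mtr (HC \<Gamma> B N ^\<^sub>m k) = sum_list (map (\<lambda>e. e ^ k) (EV \<Gamma> B N))"
    unfolding EV_def by blast+
qed

lemma HC_pow1: "HC \<Gamma> B N ^\<^sub>m 1 = HC \<Gamma> B N"
  using HC_carrier[of \<Gamma> B N] by simp

lemma HC_pow2: "HC \<Gamma> B N ^\<^sub>m 2 = HC \<Gamma> B N * HC \<Gamma> B N"
  using HC_carrier[of \<Gamma> B N] by (simp add: numeral_2_eq_2)

lemma char_HC: "char_poly (HC \<Gamma> B N) = (\<Prod>e\<leftarrow>EV \<Gamma> B N. [:- e, 1:])"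
  using EV_props(2)[of \<Gamma> B N 1] unfolding HC_pow1 by simp

lemma tri_sym: "tri d e m l = tri d e l m"
  unfolding tri_def by auto

lemma tri_abs: "\<bar>tri d e m l\<bar> = tri (\<lambda>x. \<bar>d x\<bar>) (\<lambda>x. \<bar>e x\<bar>) m l"
  unfolding tri_def by auto

lemma Hbar_sym: "i < N+1 \<Longrightarrow> j < N+1 \<Longrightarrow> Hbar \<Gamma> B N $$ (j,i) = Hbar \<Gamma> B N $$ (i,j)"
  using Hbar_tri tri_sym by metis

lemma HC_herm: "i < N+1 \<Longrightarrow> j < N+1 \<Longrightarrow> HC \<Gamma> B N $$ (j,i) = cnj (HC \<Gamma> B N $$ (i,j))"
  using Hbar_sym[of i N j \<Gamma> B] Hbar_carrier[of \<Gamma> B N] by simp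

lemma HC_adj: "mat_adjoint (HC \<Gamma> B N) = HC \<Gamma> B N"
proof (rule eq_matI)
  show "dim_row (mat_adjoint (HC \<Gamma> B N)) = dim_row (HC \<Gamma> B N)"
    using Hbar_carrier[of \<Gamma> B N] by (simp add: mat_adjoint_def)
  show "dim_col (mat_adjoint (HC \<Gamma> B N)) = dim_col (HC \<Gamma> B N)"
    using Hbar_carrier[of \<Gamma> B N] by (simp add: mat_adjoint_def)
  fix i j assume i: "i < dim_row (HC \<Gamma> B N)" and j: "j < dim_col (HC \<Gamma> B N)"
  then have i': "i < N+1" and j': "j < N+1" using Hbar_carrier[of \<Gamma> B N] by auto
  show "mat_adjoint (HC \<Gamma> B N) $$ (i, j) = HC \<Gamma> B N $$ (i, j)"
    using i' j' Hbar_carrier[of \<Gamma> B N] HC_herm[OF j' i', of \<Gamma> B]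
    by (simp add: mat_adjoint_def mat_of_rows_index)
qed

lemma char_adj: "char_poly (mat_adjoint (HC \<Gamma> B N) * HC \<Gamma> B N) = (\<Prod>e\<leftarrow>map (\<lambda>e. e^2) (EV \<Gamma> B N). [:- e, 1:])"
  using EV_props(2)[of \<Gamma> B N 2] unfolding HC_pow2 HC_adj by (simp add: o_def)

lemma eig_sum_HC: "eig_sum F (HC \<Gamma> B N) = sum_list (map F (EV \<Gamma> B N))"
  by (rule eig_sum_prod[OF char_HC])

lemma row_abs:
  assumes N: "1 \<le> N" and i: "i < N+1"
  shows "(\<Sum>j<N+1. cmod (HC \<Gamma> B N $$ (i,j))) \<le> 5 * \<bar>\<Gamma>\<bar> + 4 * \<bar>B\<bar>"
proof -
  let ?d = "\<lambda>x. \<bar>dN \<Gamma> N x\<bar>" and ?e = "\<lambda>x. \<bar>eN B N x\<bar>"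
  have "(\<Sum>j<N+1. cmod (HC \<Gamma> B N $$ (i,j))) = (\<Sum>j<N+1. 1 * tri ?d ?e j i)"
    using i Hbar_carrier[of \<Gamma> B N]
    by (intro sum.cong refl) (auto simp: Hbar_tri tri_abs[symmetric] tri_sym[of _ _ i])
  also have "\<dots> = ?d i + (if 0 < i then ?e (i-1) else 0) + (if i + 1 < N+1 then ?e i else 0)"
    using tri_sum[OF i, of "\<lambda>_. 1" ?d ?e] by simp
  also have "\<dots> \<le> 5 * \<bar>\<Gamma>\<bar> + 2 * \<bar>B\<bar> + 2 * \<bar>B\<bar>"
  proof (intro add_mono)
    have "(real i + 1) / real N \<in> {0..2}" using i N by (simp add: field_simps)
    then show "?d i \<le> 5 * \<bar>\<Gamma>\<bar>" unfolding dN_def by (rule gg_bound)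
    show "(if 0 < i then ?e (i-1) else 0) \<le> 2 * \<bar>B\<bar>" using eN_bound[OF N, of "i-1" B] i by auto
    show "(if i + 1 < N+1 then ?e i else 0) \<le> 2 * \<bar>B\<bar>" using eN_bound[OF N, of i B] i by auto
  qed
  finally show ?thesis by simp
qed

lemma EV_loc:
  assumes N: "1 \<le> N" and e: "e \<in> set (EV \<Gamma> B N)"
  shows "Im e = 0" "cmod e \<le> 5 * \<bar>\<Gamma>\<bar> + 4 * \<bar>B\<bar>"
proof -
  have r: "poly (char_poly (HC \<Gamma> B N)) e = 0" unfolding char_HC using e by (rule linear_poly_root)
  show "Im e = 0" by (rule eig_real[OF HC_carrier r]) (rule HC_herm)
  show "cmod e \<le> 5 * \<bar>\<Gamma>\<bar> + 4 * \<bar>B\<bar>" by (rule eig_bound[OF HC_carrier r]) (rule row_abs[OF N])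
qed

lemma sv_sum_HC:
  assumes N: "1 \<le> N"
  shows "sv_sum F (HC \<Gamma> B N) = sum_list (map (\<lambda>e. F (cmod e)) (EV \<Gamma> B N))"
proof -
  have "sv_sum F (HC \<Gamma> B N) = sum_list (map (\<lambda>e. F (sqrt (Re e))) (map (\<lambda>e. e^2) (EV \<Gamma> B N)))"
    by (rule sv_sum_prod[OF char_adj])
  also have "\<dots> = sum_list (map (\<lambda>e. F (cmod e)) (EV \<Gamma> B N))"
  proof -
    have "F (sqrt (Re (e^2))) = F (cmod e)" if "e \<in> set (EV \<Gamma> B N)" for e
    proof -
      have "Im e = 0" using EV_loc[OF N that] by simp
      then have "Re (e^2) = (Re e)^2" by (simp add: power2_eq_square)
      moreover have "cmod e = \<bar>Re e\<bar>" using \<open>Im e = 0\<close> by (simp add: cmod_eq_Re)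
      ultimately show ?thesis by simp
    qed
    then show ?thesis by (simp add: o_def cong: map_cong)
  qed
  finally show ?thesis .
qed

lemma approx_lim:
  fixes a :: "nat \<Rightarrow> complex"
  assumes H: "\<And>\<epsilon>. \<epsilon> > 0 \<Longrightarrow> \<exists>b L'. b \<longlonglongrightarrow> L' \<and> cmod (L' - L) \<le> \<epsilon> \<and> (\<forall>N\<ge>1. cmod (a N - b N) \<le> \<epsilon>)"
  shows "a \<longlonglongrightarrow> L"
proof (rule LIMSEQ_I)
  fix r :: real assume r: "0 < r"
  obtain b L' where b: "b \<longlonglongrightarrow> L'" and L: "cmod (L' - L) \<le> r / 4" and ab: "\<forall>N\<ge>1. cmod (a N - b N) \<le> r / 4"
    using H[of "r/4"] r by auto
  obtain N0 where N0: "\<forall>N\<ge>N0. norm (b N - L') < r / 4" using LIMSEQ_D[OF b, of "r/4"] r by auto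
  show "\<exists>no. \<forall>N\<ge>no. norm (a N - L) < r"
  proof (intro exI allI impI)
    fix N assume N: "N \<ge> N0 + 1"
    have "a N - L = (a N - b N) + (b N - L') + (L' - L)" by simp
    then have "cmod (a N - L) \<le> cmod (a N - b N) + cmod (b N - L') + cmod (L' - L)"
      by (metis norm_triangle_ineq order_trans add_right_mono)
    also have "\<dots> < r / 4 + r / 4 + r / 4" using ab N0 L N by (intro add_less_le_mono add_le_less_mono) auto
    finally show "norm (a N - L) < r" using r by simp
  qed
qed

lemma sum_list_swap: "sum_list (map (\<lambda>e. \<Sum>j\<in>J. f j e) es) = (\<Sum>j\<in>J. sum_list (map (f j) es))"
  by (induct es) (auto simp: sum.distrib)

lemma norm_sum_list_le:
  fixes f :: "'a \<Rightarrow> 'b::real_normed_vector"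
  assumes "\<And>e. e \<in> set es \<Longrightarrow> norm (f e) \<le> c"
  shows "norm (sum_list (map f es)) \<le> real (length es) * c"
  using assms
proof (induct es)
  case Nil then show ?case by simp
next
  case (Cons a es)
  have "norm (sum_list (map f (a # es))) \<le> norm (f a) + norm (sum_list (map f es))"
    by (simp add: norm_triangle_ineq)
  also have "\<dots> \<le> c + real (length es) * c" using Cons by (intro add_mono) auto
  finally show ?case by (simp add: algebra_simps)
qed

lemma integrable_symD:
  fixes G :: "complex \<Rightarrow> complex"
  assumes "continuous_on UNIV G"
  shows "(\<lambda>p. G (h0CW \<Gamma> B p)) integrable_on symD"
proof -
  have c: "continuous_on UNIV (\<lambda>p. G (h0CW \<Gamma> B p))"
    by (rule continuous_on_compose2[OF assms cont_h]) auto
  show ?thesis unfolding symD_cbox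
    by (rule Henstock_Kurzweil_Integration.integrable_continuous, rule continuous_on_subset[OF c]) auto
qed

lemma poly_mom_limit:
  assumes J: "finite J"
  shows "(\<lambda>N. sum_list (map (\<lambda>e. \<Sum>j\<in>J. c j * e ^ j) (EV \<Gamma> B N)) / of_nat (N+1))
     \<longlonglongrightarrow> integral symD (\<lambda>p. \<Sum>j\<in>J. c j * (h0CW \<Gamma> B p) ^ j) / (2 * complex_of_real pi)"
proof -
  define m where "m = (\<lambda>j. complex_of_real (integral {0..1} (\<lambda>x. qq (gg \<Gamma> x) (cc B x) j 0)))"
  have lhs: "sum_list (map (\<lambda>e. \<Sum>j\<in>J. c j * e ^ j) (EV \<Gamma> B N)) / of_nat (N+1)
      = (\<Sum>j\<in>J. c j * (mtr (HC \<Gamma> B N ^\<^sub>m j) / of_nat (N+1)))" for N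
    unfolding sum_list_swap EV_props(3) by (simp add: sum_list_const_mult sum_divide_distrib)
  have int: "(\<lambda>p. c j * (h0CW \<Gamma> B p) ^ j) integrable_on symD" for j
    using integrable_symD[of "\<lambda>z. c j * z ^ j" \<Gamma> B] by (simp add: continuous_intros)
  have rhs: "integral symD (\<lambda>p. \<Sum>j\<in>J. c j * (h0CW \<Gamma> B p) ^ j) / (2 * complex_of_real pi) = (\<Sum>j\<in>J. c j * m j)"
    unfolding integral_sum[OF J int] integral_mult_right moment_integral m_def
    by (simp add: sum_divide_distrib)
  show ?thesis unfolding lhs rhs m_def
    by (intro tendsto_sum tendsto_mult tendsto_const mom_limit_C)
qed

lemma sum_pad:
  fixes a :: "nat \<Rightarrow> real"
  assumes "n \<le> D"
  shows "(\<Sum>j\<le>D. (if j \<le> n then a j else 0) * x ^ j) = (\<Sum>j\<le>n. a j * x ^ j)"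
  by (rule sum.mono_neutral_cong_right) (use assms in auto)

theorem core:
  assumes G: "continuous_on UNIV G"
  shows "(\<lambda>N. sum_list (map G (EV \<Gamma> B N)) / of_nat (N+1)) \<longlonglongrightarrow> integral symD (\<lambda>p. G (h0CW \<Gamma> B p)) / (2 * complex_of_real pi)"
proof (rule approx_lim)
  fix \<epsilon> :: real assume eps: "\<epsilon> > 0"
  define M where "M = 5 * \<bar>\<Gamma>\<bar> + 4 * \<bar>B\<bar>"
  define S where "S = {-M..M}"
  have hS: "\<exists>r\<in>S. h0CW \<Gamma> B p = complex_of_real r" if p: "p \<in> symD" for p
  proof -
    obtain x t where pe: "p = (x,t)" and x: "x \<in> {0..2}" using p unfolding symD_def by auto
    have "\<bar>gg \<Gamma> x + 2 * cc B x * cos t\<bar> \<le> 5 * \<bar>\<Gamma>\<bar> + 2 * (2 * \<bar>B\<bar>) * 1"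
    proof -
      have "\<bar>2 * cc B x * cos t\<bar> \<le> 2 * (2 * \<bar>B\<bar>) * 1" unfolding abs_mult
        using cc_bound[OF x, of B] by (intro mult_mono) auto
      then show ?thesis using gg_bound[OF x, of \<Gamma>] by linarith
    qed
    then show ?thesis unfolding pe h0CW_eq S_def M_def
      by (intro bexI[where x="gg \<Gamma> x + 2 * cc B x * cos t"]) auto
  qed
  have eS: "\<exists>r\<in>S. e = complex_of_real r" if N: "1 \<le> N" and e: "e \<in> set (EV \<Gamma> B N)" for N e
  proof (intro bexI)
    show "e = complex_of_real (Re e)" using EV_loc(1)[OF N e] by (simp add: complex_eq_iff)
    have "\<bar>Re e\<bar> \<le> M" using EV_loc(2)[OF N e] abs_Re_le_cmod[of e] unfolding M_def by linarith
    then show "Re e \<in> S" unfolding S_def by auto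
  qed
  have cG: "continuous_on UNIV (\<lambda>x::real. G (of_real x))"
    by (rule continuous_on_compose2[OF G]) (auto intro: continuous_intros)
  have cS: "compact S" unfolding S_def by simp
  have e4: "\<epsilon> / 4 > 0" using eps by simp
  obtain g1 where rp1: "real_polynomial_function g1" and ap1: "\<And>x. x \<in> S \<Longrightarrow> \<bar>Re (G (of_real x)) - g1 x\<bar> < \<epsilon> / 4"
    by (rule Stone_Weierstrass_real_polynomial_function[where f="\<lambda>x. Re (G (of_real x))", OF cS _ e4])
       (intro continuous_intros continuous_on_subset[OF cG], auto)
  obtain g2 where rp2: "real_polynomial_function g2" and ap2: "\<And>x. x \<in> S \<Longrightarrow> \<bar>Im (G (of_real x)) - g2 x\<bar> < \<epsilon> / 4"
    by (rule Stone_Weierstrass_real_polynomial_function[where f="\<lambda>x. Im (G (of_real x))", OF cS _ e4])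
       (intro continuous_intros continuous_on_subset[OF cG], auto)
  obtain a1 n1 where g1: "g1 = (\<lambda>x. \<Sum>i\<le>n1. a1 i * x ^ i)" using real_polynomial_function_imp_sum[OF rp1] by blast
  obtain a2 n2 where g2: "g2 = (\<lambda>x. \<Sum>i\<le>n2. a2 i * x ^ i)" using real_polynomial_function_imp_sum[OF rp2] by blast
  define D where "D = max n1 n2"
  define c where "c = (\<lambda>j. complex_of_real (if j \<le> n1 then a1 j else 0) + \<i> * complex_of_real (if j \<le> n2 then a2 j else 0))"
  define P where "P = (\<lambda>z::complex. \<Sum>j\<in>{..D}. c j * z ^ j)"
  have Preal: "P (of_real x) = complex_of_real (g1 x) + \<i> * complex_of_real (g2 x)" for x
  proof -
    have "P (of_real x) = complex_of_real (\<Sum>j\<le>D. (if j \<le> n1 then a1 j else 0) * x ^ j)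
        + \<i> * complex_of_real (\<Sum>j\<le>D. (if j \<le> n2 then a2 j else 0) * x ^ j)"
      unfolding P_def c_def by (simp add: algebra_simps sum.distrib sum_distrib_left of_real_sum)
    then show ?thesis unfolding g1 g2 using sum_pad[of n1 D a1 x] sum_pad[of n2 D a2 x] unfolding D_def by simp
  qed
  have close: "cmod (G z - P z) \<le> \<epsilon> / 2" if z: "\<exists>r\<in>S. z = complex_of_real r" for z
  proof -
    obtain r where r: "r \<in> S" and zr: "z = complex_of_real r" using z by blast
    have "G z - P z = complex_of_real (Re (G (of_real r)) - g1 r) + \<i> * complex_of_real (Im (G (of_real r)) - g2 r)"
      unfolding zr Preal by (simp add: complex_eq_iff)
    also have "cmod \<dots> \<le> \<bar>Re (G (of_real r)) - g1 r\<bar> + \<bar>Im (G (of_real r)) - g2 r\<bar>"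
      by (rule order_trans[OF norm_triangle_ineq]) (simp add: norm_mult flip: of_real_diff)
    also have "\<dots> \<le> \<epsilon> / 4 + \<epsilon> / 4" using ap1[OF r] ap2[OF r] by simp
    finally show ?thesis by simp
  qed
  define L where "L = integral symD (\<lambda>p. G (h0CW \<Gamma> B p)) / (2 * complex_of_real pi)"
  define L' where "L' = integral symD (\<lambda>p. P (h0CW \<Gamma> B p)) / (2 * complex_of_real pi)"
  have lim: "(\<lambda>N. sum_list (map P (EV \<Gamma> B N)) / of_nat (N+1)) \<longlonglongrightarrow> L'"
    unfolding L'_def P_def by (rule poly_mom_limit) simp
  have cP: "continuous_on UNIV P" unfolding P_def by (intro continuous_intros)
  have "cmod (L' - L) \<le> \<epsilon>"
  proof -
    have "L' - L = integral symD (\<lambda>p. P (h0CW \<Gamma> B p) - G (h0CW \<Gamma> B p)) / (2 * complex_of_real pi)"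
      unfolding L_def L'_def
      by (simp add: integral_diff[OF integrable_symD[OF cP] integrable_symD[OF G]] diff_divide_distrib)
    also have "cmod \<dots> \<le> \<epsilon> / 2"
    proof -
      have hi: "((\<lambda>p. P (h0CW \<Gamma> B p) - G (h0CW \<Gamma> B p)) has_integral
          integral symD (\<lambda>p. P (h0CW \<Gamma> B p) - G (h0CW \<Gamma> B p))) (cbox (0, -pi) (1, pi))"
        unfolding symD_cbox[symmetric]
        by (intro integrable_integral integrable_diff integrable_symD cP G)
      have "cmod (integral symD (\<lambda>p. P (h0CW \<Gamma> B p) - G (h0CW \<Gamma> B p))) \<le> \<epsilon> / 2 * Henstock_Kurzweil_Integration.content (cbox (0, -pi) (1::real, pi::real))"
      proof (rule has_integral_bound[OF _ hi])
        show "0 \<le> \<epsilon> / 2" using eps by simp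
        fix p assume "p \<in> cbox (0, -pi) (1::real, pi::real)"
        then have "p \<in> symD" unfolding symD_cbox .
        then show "cmod (P (h0CW \<Gamma> B p) - G (h0CW \<Gamma> B p)) \<le> \<epsilon> / 2"
          using close[OF hS] by (simp add: norm_minus_commute)
      qed
      also have "Henstock_Kurzweil_Integration.content (cbox (0, -pi) (1::real, pi::real)) = 2 * pi"
        unfolding content_Pair by (simp add: cbox_interval)
      finally have "cmod (integral symD (\<lambda>p. P (h0CW \<Gamma> B p) - G (h0CW \<Gamma> B p))) \<le> \<epsilon> * pi" by simp
      then show ?thesis by (simp add: norm_divide norm_mult field_simps)
    qed
    finally show ?thesis using eps by simp
  qed
  moreover have "cmod (sum_list (map G (EV \<Gamma> B N)) / of_nat (N+1) - sum_list (map P (EV \<Gamma> B N)) / of_nat (N+1)) \<le> \<epsilon>"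
    if N: "N \<ge> 1" for N
  proof -
    have "cmod (sum_list (map (\<lambda>e. G e - P e) (EV \<Gamma> B N))) \<le> real (length (EV \<Gamma> B N)) * (\<epsilon> / 2)"
      by (rule norm_sum_list_le) (use close eS[OF N] in blast)
    then have "cmod (sum_list (map G (EV \<Gamma> B N)) - sum_list (map P (EV \<Gamma> B N))) \<le> real (N+1) * (\<epsilon> / 2)"
      by (simp add: sum_list_subtractf EV_props(1))
    then have "cmod (sum_list (map G (EV \<Gamma> B N)) - sum_list (map P (EV \<Gamma> B N))) / real (N+1) \<le> \<epsilon> / 2"
      by (simp add: field_simps)
    moreover have "sum_list (map G (EV \<Gamma> B N)) / of_nat (N+1) - sum_list (map P (EV \<Gamma> B N)) / of_nat (N+1)
       = (sum_list (map G (EV \<Gamma> B N)) - sum_list (map P (EV \<Gamma> B N))) / complex_of_real (real (N+1))"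
      by (simp add: diff_divide_distrib)
    moreover have "cmod (complex_of_real (real (N+1))) = real (N+1)" by (simp only: norm_of_real abs_of_nat)
    ultimately show ?thesis using eps by (simp only: norm_divide)
  qed
  ultimately show "\<exists>b L'. b \<longlonglongrightarrow> L' \<and> cmod (L' - integral symD (\<lambda>p. G (h0CW \<Gamma> B p)) / (2 * complex_of_real pi)) \<le> \<epsilon>
      \<and> (\<forall>N\<ge>1. cmod (sum_list (map G (EV \<Gamma> B N)) / of_nat (N+1) - b N) \<le> \<epsilon>)"
    using lim unfolding L_def by blast
qed

lemma lambda_part: "lambda_distributed (\<lambda>N. map_mat complex_of_real (Hbar \<Gamma> B N)) (h0CW \<Gamma> B)"
  unfolding lambda_distributed_def
proof (intro allI impI)
  fix F :: "complex \<Rightarrow> complex" assume "compact_supp F"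
  then have cF: "continuous_on UNIV F" unfolding compact_supp_def by simp
  have "(\<lambda>N. sum_list (map F (EV \<Gamma> B N)) / of_nat (N+1)) \<longlonglongrightarrow> integral symD (\<lambda>p. F (h0CW \<Gamma> B p)) / (2 * complex_of_real pi)"
    by (rule core[OF cF])
  moreover have "eig_sum F (HC \<Gamma> B N) / of_nat (dim_row (HC \<Gamma> B N)) = sum_list (map F (EV \<Gamma> B N)) / of_nat (N+1)" for N
    using HC_carrier[of \<Gamma> B N] by (simp add: eig_sum_HC)
  ultimately show "(\<lambda>N. eig_sum F (HC \<Gamma> B N) / of_nat (dim_row (HC \<Gamma> B N))) \<longlonglongrightarrow> integral symD (\<lambda>p. F (h0CW \<Gamma> B p)) / (2 * pi)"
    by simp
qed

lemma sigma_part: "sigma_distributed (\<lambda>N. map_mat complex_of_real (Hbar \<Gamma> B N)) (h0CW \<Gamma> B)"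
  unfolding sigma_distributed_def
proof (intro allI impI)
  fix F :: "real \<Rightarrow> complex" assume "compact_supp F"
  then have cF: "continuous_on UNIV F" unfolding compact_supp_def by simp
  have cG: "continuous_on UNIV (\<lambda>z::complex. F (cmod z))"
    by (rule continuous_on_compose2[OF cF]) (auto intro: continuous_intros)
  have lim: "(\<lambda>N. sum_list (map (\<lambda>z. F (cmod z)) (EV \<Gamma> B N)) / of_nat (N+1)) \<longlonglongrightarrow> integral symD (\<lambda>p. F (cmod (h0CW \<Gamma> B p))) / (2 * complex_of_real pi)"
    by (rule core[OF cG])
  have ev: "\<forall>\<^sub>F N in sequentially. sum_list (map (\<lambda>z. F (cmod z)) (EV \<Gamma> B N)) / of_nat (N+1) = sv_sum F (HC \<Gamma> B N) / of_nat (dim_row (HC \<Gamma> B N))"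
    unfolding eventually_sequentially
  proof (intro exI[of _ 1] allI impI)
    fix N :: nat assume N: "1 \<le> N"
    have dim: "dim_row (HC \<Gamma> B N) = N+1" using HC_carrier[of \<Gamma> B N] by auto
    show "sum_list (map (\<lambda>z. F (cmod z)) (EV \<Gamma> B N)) / of_nat (N+1) = sv_sum F (HC \<Gamma> B N) / of_nat (dim_row (HC \<Gamma> B N))"
      unfolding dim sv_sum_HC[OF N] ..
  qed
  show "(\<lambda>N. sv_sum F (HC \<Gamma> B N) / of_nat (dim_row (HC \<Gamma> B N))) \<longlonglongrightarrow> integral symD (\<lambda>p. F (cmod (h0CW \<Gamma> B p))) / (2 * pi)"
    using Lim_transform_eventually[OF lim ev] by simp
qed

lemma riemann_cont:
  fixes a :: "real \<Rightarrow> complex"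
  assumes ca: "continuous_on UNIV a"
  shows "riemann_integrable01 a"
  unfolding riemann_integrable01_def
proof (rule exI[of _ "integral {0..1} a"], intro allI impI)
  fix e :: real assume e: "0 < e"
  have "uniformly_continuous_on {0..1} a"
    by (rule compact_uniformly_continuous) (auto intro: continuous_on_subset[OF ca])
  then obtain \<delta> where d: "\<delta> > 0" and uc: "\<And>x y. x \<in> {0..1} \<Longrightarrow> y \<in> {0..1} \<Longrightarrow> dist y x < \<delta> \<Longrightarrow> dist (a y) (a x) < e / 2"
    unfolding uniformly_continuous_on_def using e by (metis half_gt_zero)
  show "\<exists>\<delta>>0. \<forall>\<D>. \<D> tagged_division_of {0..1} \<and> (\<lambda>x. ball x \<delta>) fine \<D> \<longrightarrow>
      norm ((\<Sum>(x, K)\<in>\<D>. Henstock_Kurzweil_Integration.content K *\<^sub>R a x) - integral {0..1} a) < e"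
  proof (intro exI[of _ \<delta>] conjI allI impI)
    show "\<delta> > 0" by (rule d)
    fix D :: "(real \<times> real set) set" assume DD: "D tagged_division_of {0..1} \<and> (\<lambda>x. ball x \<delta>) fine D"
    have D: "D tagged_division_of cbox (0::real) 1" using DD by (simp add: box_real)
    have fine: "(\<lambda>x. ball x \<delta>) fine D" using DD by simp
    have int: "a integrable_on cbox (0::real) 1"
      by (intro integrable_continuous continuous_on_subset[OF ca]) auto
    have split: "integral {0..1} a = (\<Sum>(x, K)\<in>D. integral K a)"
      using integral_combine_tagged_division_topdown[OF int D] by (simp add: cbox_interval)
    have fin: "finite D" using D by (rule tagged_division_of_finite)
    have piece: "norm (Henstock_Kurzweil_Integration.content K *\<^sub>R a x - integral K a) \<le> e / 2 * Henstock_Kurzweil_Integration.content K"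
      if xK: "(x, K) \<in> D" for x K
    proof -
      obtain u v where K: "K = cbox u v" using tagged_division_ofD(4)[OF D xK] by blast
      have xK': "x \<in> K" and Ksub: "K \<subseteq> cbox 0 1" using tagged_division_ofD(2,3)[OF D xK] by auto
      have Kb: "K \<subseteq> ball x \<delta>" using fine xK unfolding fine_def by blast
      have intK: "a integrable_on K" using integrable_on_subcbox[OF int] Ksub K by auto
      have hi: "((\<lambda>y. a x - a y) has_integral (Henstock_Kurzweil_Integration.content K *\<^sub>R a x - integral K a)) (cbox u v)"
      proof -
        have i2: "(a has_integral integral K a) (cbox u v)" using integrable_integral[OF intK] K by simp
        show ?thesis using has_integral_diff[OF has_integral_const[of "a x" u v] i2] K by simp
      qed
      have "norm (Henstock_Kurzweil_Integration.content K *\<^sub>R a x - integral K a) \<le> e / 2 * Henstock_Kurzweil_Integration.content (cbox u v)"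
      proof (rule has_integral_bound[OF _ hi])
        show "0 \<le> e / 2" using e by simp
        fix y assume y: "y \<in> cbox u v"
        then have "y \<in> K" using K by simp
        then have yb: "dist x y < \<delta>" and y01: "y \<in> {0..1}" using Kb Ksub by (auto simp: cbox_interval)
        have x01: "x \<in> {0..1}" using xK' Ksub by (auto simp: cbox_interval)
        show "norm (a x - a y) \<le> e / 2" using uc[OF y01 x01] yb by (simp add: dist_norm dist_commute norm_minus_commute)
      qed
      then show ?thesis using K by simp
    qed
    have piece': "norm (Henstock_Kurzweil_Integration.content (snd p) *\<^sub>R a (fst p) - integral (snd p) a) \<le> e / 2 * Henstock_Kurzweil_Integration.content (snd p)"
      if "p \<in> D" for p using piece[of "fst p" "snd p"] that by simp
    have "norm ((\<Sum>(x, K)\<in>D. Henstock_Kurzweil_Integration.content K *\<^sub>R a x) - integral {0..1} a)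
       = norm (\<Sum>p\<in>D. Henstock_Kurzweil_Integration.content (snd p) *\<^sub>R a (fst p) - integral (snd p) a)"
      unfolding split by (simp add: sum_subtractf case_prod_unfold)
    also have "\<dots> \<le> (\<Sum>p\<in>D. e / 2 * Henstock_Kurzweil_Integration.content (snd p))"
      by (rule order_trans[OF norm_sum], rule sum_mono, rule piece')
    also have "\<dots> = e / 2 * (\<Sum>(x, K)\<in>D. Henstock_Kurzweil_Integration.content K)"
      by (simp add: sum_distrib_left case_prod_unfold)
    also have "(\<Sum>(x, K)\<in>D. Henstock_Kurzweil_Integration.content K) = 1"
      using additive_content_tagged_division[OF D] by simp
    finally show "norm ((\<Sum>(x, K)\<in>D. Henstock_Kurzweil_Integration.content K *\<^sub>R a x) - integral {0..1} a) < e"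
      using e by simp
  qed
qed

definition cosf :: "real \<Rightarrow> complex" where "cosf t = complex_of_real (2 * cos t)"

lemma fourier_cosf: "fourier_coeff cosf k = (if k = 1 \<or> k = -1 then 1 else 0)"
proof -
  have e: "cosf t * exp (- (\<i> * of_real (of_int k * t))) = EE (1 - k) t + EE (-1 - k) t" for t
  proof -
    have "exp (- (\<i> * of_real (of_int k * t))) = EE (-k) t" unfolding EE_def by simp
    then show ?thesis unfolding cosf_def cos_EE by (simp add: distrib_right EE_mult)
  qed
  have "integral {-pi..pi} (\<lambda>t. cosf t * exp (- (\<i> * of_real (of_int k * t)))) =
      integral {-pi..pi} (EE (1 - k)) + integral {-pi..pi} (EE (-1 - k))"
    unfolding e by (intro integral_add integrable_continuous_interval cont_EE)
  also have "\<dots> = (if k = 1 \<or> k = -1 then of_real (2 * pi) else 0)"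
    unfolding int_EE by auto
  finally show ?thesis unfolding fourier_coeff_def by auto
qed

lemma spec_norm_bound:
  fixes Z :: "complex mat"
  assumes Z: "Z \<in> carrier_mat n n" and R: "\<And>i. i < n \<Longrightarrow> (\<Sum>j<n. cmod (Z $$ (i,j))) \<le> R"
    and C: "\<And>j. j < n \<Longrightarrow> (\<Sum>i<n. cmod (Z $$ (i,j))) \<le> C" and R0: "0 \<le> R" and C0: "0 \<le> C"
  shows "spec_norm Z \<le> sqrt (R * C)"
proof -
  define M where "M = mat_adjoint Z * Z"
  have adj: "mat_adjoint Z \<in> carrier_mat n n" using Z unfolding carrier_mat_def mat_adjoint_def by auto
  have adje: "mat_adjoint Z $$ (i,l) = cnj (Z $$ (l,i))" if "i < n" "l < n" for i l
    using Z that by (simp add: mat_adjoint_def mat_of_rows_index)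
  have M: "M \<in> carrier_mat n n" unfolding M_def using adj Z by simp
  have Me: "M $$ (i,j) = (\<Sum>l<n. cnj (Z $$ (l,i)) * Z $$ (l,j))" if "i < n" "j < n" for i j
    unfolding M_def using mult_entry[OF adj Z that] adje that by simp
  have rowM: "(\<Sum>j<n. cmod (M $$ (i,j))) \<le> R * C" if i: "i < n" for i
  proof -
    have "(\<Sum>j<n. cmod (M $$ (i,j))) \<le> (\<Sum>j<n. \<Sum>l<n. cmod (Z $$ (l,i)) * cmod (Z $$ (l,j)))"
    proof (rule sum_mono)
      fix j assume "j \<in> {..<n}"
      then have "cmod (M $$ (i,j)) = cmod (\<Sum>l<n. cnj (Z $$ (l,i)) * Z $$ (l,j))" using Me i by simp
      also have "\<dots> \<le> (\<Sum>l<n. cmod (Z $$ (l,i)) * cmod (Z $$ (l,j)))"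
        by (rule order_trans[OF norm_sum]) (simp add: norm_mult)
      finally show "cmod (M $$ (i,j)) \<le> (\<Sum>l<n. cmod (Z $$ (l,i)) * cmod (Z $$ (l,j)))" .
    qed
    also have "\<dots> = (\<Sum>l<n. cmod (Z $$ (l,i)) * (\<Sum>j<n. cmod (Z $$ (l,j))))"
      by (subst sum.swap) (simp add: sum_distrib_left)
    also have "\<dots> \<le> (\<Sum>l<n. cmod (Z $$ (l,i)) * R)"
      by (intro sum_mono mult_left_mono R) auto
    also have "\<dots> = (\<Sum>l<n. cmod (Z $$ (l,i))) * R" by (simp add: sum_distrib_right)
    also have "\<dots> \<le> C * R" using C[OF i] R0 by (intro mult_right_mono) auto
    finally show ?thesis by (simp add: mult.commute)
  qed
  have nz: "char_poly M \<noteq> 0"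
  proof
    assume "char_poly M = 0"
    then show False using degree_monic_char_poly[OF M] by simp
  qed
  have fin: "finite {\<mu>. poly (char_poly M) \<mu> = 0}" by (rule poly_roots_finite[OF nz])
  have eqS: "{sqrt (Re \<mu>) |\<mu>. poly (char_poly M) \<mu> = 0} = (\<lambda>\<mu>. sqrt (Re \<mu>)) ` {\<mu>. poly (char_poly M) \<mu> = 0}" by auto
  have le: "x \<le> sqrt (R * C)" if x: "x \<in> {sqrt (Re \<mu>) |\<mu>. poly (char_poly M) \<mu> = 0} \<union> {0}" for x
  proof -
    consider "x = 0" | \<mu> where "x = sqrt (Re \<mu>)" "poly (char_poly M) \<mu> = 0" using x by blast
    then show ?thesis
    proof cases
      case 1 then show ?thesis using R0 C0 by simp
    next
      case 2
      have "cmod \<mu> \<le> R * C" by (rule eig_bound[OF M 2(2) rowM])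
      then have "Re \<mu> \<le> R * C" using complex_Re_le_cmod[of \<mu>] by linarith
      then show ?thesis using 2(1) by simp
    qed
  qed
  show ?thesis unfolding spec_norm_def M_def[symmetric]
    by (subst Max_le_iff) (use fin le eqS in auto)
qed

lemma card3: fixes n i :: nat shows "card {j\<in>{..<n}. j = i \<or> j = i + 1 \<or> i = j + 1} \<le> 3"
proof -
  have "{j\<in>{..<n}. j = i \<or> j = i + 1 \<or> i = j + 1} \<subseteq> {i, i+1, i-1}" by auto
  then have "card {j\<in>{..<n}. j = i \<or> j = i + 1 \<or> i = j + 1} \<le> card {i, i+1, i-1}" by (intro card_mono) auto
  also have "\<dots> \<le> 3" by (simp add: card_insert_if)
  finally show ?thesis .
qed

lemma tridiag_spec:
  fixes Z :: "complex mat"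
  assumes Z: "Z \<in> carrier_mat n n" and eta: "0 \<le> \<eta>"
    and b: "\<And>i j. i < n \<Longrightarrow> j < n \<Longrightarrow> cmod (Z $$ (i,j)) \<le> \<eta>"
    and z: "\<And>i j. i < n \<Longrightarrow> j < n \<Longrightarrow> \<not> (j = i \<or> j = i + 1 \<or> i = j + 1) \<Longrightarrow> Z $$ (i,j) = 0"
  shows "spec_norm Z \<le> 3 * \<eta>"
proof -
  have bb: "cmod (Z $$ (i,j)) \<le> (if j = i \<or> j = i + 1 \<or> i = j + 1 then \<eta> else 0)" if "i < n" "j < n" for i j
    using b[OF that] z[OF that] by auto
  have R: "(\<Sum>j<n. cmod (Z $$ (i,j))) \<le> 3 * \<eta>" if i: "i < n" for i
  proof -
    have "(\<Sum>j<n. cmod (Z $$ (i,j))) \<le> (\<Sum>j<n. (if j = i \<or> j = i + 1 \<or> i = j + 1 then \<eta> else 0))"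
      by (intro sum_mono bb i) auto
    also have "\<dots> = real (card {j\<in>{..<n}. j = i \<or> j = i + 1 \<or> i = j + 1}) * \<eta>"
      using sum.inter_filter[of "{..<n}" "\<lambda>_. \<eta>" "\<lambda>j. j = i \<or> j = i + 1 \<or> i = j + 1"] by simp
    also have "\<dots> \<le> 3 * \<eta>" using card3[of n i] eta by (intro mult_right_mono) auto
    finally show ?thesis .
  qed
  have C: "(\<Sum>i<n. cmod (Z $$ (i,j))) \<le> 3 * \<eta>" if j: "j < n" for j
  proof -
    have "(\<Sum>i<n. cmod (Z $$ (i,j))) \<le> (\<Sum>i<n. (if i = j \<or> i = j + 1 \<or> j = i + 1 then \<eta> else 0))"
    proof (rule sum_mono)
      fix i assume "i \<in> {..<n}"
      then show "cmod (Z $$ (i,j)) \<le> (if i = j \<or> i = j + 1 \<or> j = i + 1 then \<eta> else 0)"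
        using bb[of i j] j by (cases "i = j \<or> i = j + 1 \<or> j = i + 1") auto
    qed
    also have "\<dots> = real (card {i\<in>{..<n}. i = j \<or> i = j + 1 \<or> j = i + 1}) * \<eta>"
      using sum.inter_filter[of "{..<n}" "\<lambda>_. \<eta>" "\<lambda>i. i = j \<or> i = j + 1 \<or> j = i + 1"] by simp
    also have "\<dots> \<le> 3 * \<eta>" using card3[of n j] eta by (intro mult_right_mono) auto
    finally show ?thesis .
  qed
  have "spec_norm Z \<le> sqrt ((3 * \<eta>) * (3 * \<eta>))"
    by (rule spec_norm_bound[OF Z R C]) (use eta in auto)
  also have "\<dots> = 3 * \<eta>" using eta by (simp add: real_sqrt_mult)
  finally show ?thesis .
qed

definition ag :: "real \<Rightarrow> real \<Rightarrow> complex" where "ag \<Gamma> x = complex_of_real (gg \<Gamma> x)"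
definition ac :: "real \<Rightarrow> real \<Rightarrow> complex" where "ac B x = complex_of_real (cc B x)"
definition BseqM :: "real \<Rightarrow> real \<Rightarrow> nat \<Rightarrow> complex mat" where
  "BseqM \<Gamma> B n = diag_sample n (ag \<Gamma>) + diag_sample n (ac B) * toeplitz n cosf"

lemma GLT_cong: "GLT A \<kappa> \<Longrightarrow> \<kappa> = \<kappa>' \<Longrightarrow> GLT A \<kappa>'" by simp

lemma GLT_B: "GLT (BseqM \<Gamma> B) (h0CW \<Gamma> B)"
proof -
  have g1: "GLT (\<lambda>n. diag_sample n (ag \<Gamma>)) (\<lambda>(x, \<theta>). ag \<Gamma> x)"
    by (rule GLT.diag, rule riemann_cont) (auto simp: ag_def gg_def intro!: continuous_intros)
  have g2: "GLT (\<lambda>n. diag_sample n (ac B)) (\<lambda>(x, \<theta>). ac B x)"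
    by (rule GLT.diag, rule riemann_cont) (auto simp: ac_def cc_def intro!: continuous_intros)
  have g3: "GLT (\<lambda>n. toeplitz n cosf) (\<lambda>(x, \<theta>). cosf \<theta>)"
    by (rule GLT.toeplitz, rule absolutely_integrable_continuous_real) (auto simp: cosf_def intro!: continuous_intros)
  have "GLT (\<lambda>n. diag_sample n (ag \<Gamma>) + diag_sample n (ac B) * toeplitz n cosf)
      (\<lambda>p. (\<lambda>(x, \<theta>). ag \<Gamma> x) p + (\<lambda>(x, \<theta>). ac B x) p * (\<lambda>(x, \<theta>). cosf \<theta>) p)"
    by (rule GLT.add[OF g1 GLT.mult[OF g2 g3]])
  then show ?thesis unfolding BseqM_def[abs_def]
    by (rule GLT_cong) (auto simp: ag_def ac_def cosf_def h0CW_eq fun_eq_iff)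
qed

lemma diag_carrier: "diag_sample n a \<in> carrier_mat n n" unfolding diag_sample_def by simp
lemma toep_carrier: "toeplitz n f \<in> carrier_mat n n" unfolding toeplitz_def by simp
lemma Bseq_carrier: "BseqM \<Gamma> B n \<in> carrier_mat n n"
  unfolding BseqM_def using diag_carrier toep_carrier by (intro add_carrier_mat mult_carrier_mat) auto

lemma Bseq_entry:
  assumes "i < n" "j < n"
  shows "BseqM \<Gamma> B n $$ (i,j) = (if i = j then ag \<Gamma> ((real i + 1) / real n) else 0)
     + (if i = j + 1 \<or> j = i + 1 then ac B ((real i + 1) / real n) else 0)"
proof -
  have "(diag_sample n (ac B) * toeplitz n cosf) $$ (i,j) = (\<Sum>l<n. diag_sample n (ac B) $$ (i,l) * toeplitz n cosf $$ (l,j))"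
    by (rule mult_entry[OF diag_carrier toep_carrier assms])
  also have "\<dots> = (\<Sum>l<n. (if l = i then ac B (real (Suc i) / real n) * fourier_coeff cosf (int i - int j) else 0))"
    using assms by (intro sum.cong) (auto simp: diag_sample_def toeplitz_def)
  also have "\<dots> = ac B (real (Suc i) / real n) * fourier_coeff cosf (int i - int j)" using assms by simp
  also have "\<dots> = (if i = j + 1 \<or> j = i + 1 then ac B ((real i + 1) / real n) else 0)"
    unfolding fourier_cosf by (auto simp: add.commute)
  finally have p: "(diag_sample n (ac B) * toeplitz n cosf) $$ (i,j) = (if i = j + 1 \<or> j = i + 1 then ac B ((real i + 1) / real n) else 0)" .
  have pc: "diag_sample n (ac B) * toeplitz n cosf \<in> carrier_mat n n" by (rule mult_carrier_mat[OF diag_carrier toep_carrier])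
  have "BseqM \<Gamma> B n $$ (i,j) = diag_sample n (ag \<Gamma>) $$ (i,j) + (diag_sample n (ac B) * toeplitz n cosf) $$ (i,j)"
    unfolding BseqM_def using pc assms by (intro index_add_mat(1)) auto
  also have "diag_sample n (ag \<Gamma>) $$ (i,j) = (if i = j then ag \<Gamma> ((real i + 1) / real n) else 0)"
    using assms by (simp add: diag_sample_def add.commute)
  finally show ?thesis unfolding p .
qed

definition Aseq :: "real \<Rightarrow> real \<Rightarrow> nat \<Rightarrow> complex mat" where
  "Aseq \<Gamma> B n = (if n = 0 then 0\<^sub>m 0 0 else map_mat complex_of_real (Hbar \<Gamma> B (n - 1)))"

lemma Aseq_carrier: "Aseq \<Gamma> B n \<in> carrier_mat n n"
  unfolding Aseq_def using HC_carrier[of \<Gamma> B "n-1"] by auto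

lemma frac1:
  fixes N r :: real
  assumes "1 \<le> N" "0 \<le> r" "r \<le> N + 1"
  shows "\<bar>r / N - r / (N + 1)\<bar> \<le> 1 / N"
proof -
  have "0 \<le> N * N" using assms by simp
  then have nz: "N + N * N \<noteq> 0" "N \<noteq> 0" using assms by linarith+
  have "r / N - r / (N + 1) = r / (N * (N + 1))" using assms nz by (simp add: field_simps)
  moreover have "r / (N * (N + 1)) \<le> (N + 1) / (N * (N + 1))" using assms by (intro divide_right_mono) auto
  moreover have "(N + 1) / (N * (N + 1)) = 1 / N" using assms nz by (simp add: field_simps)
  moreover have "0 \<le> r / (N * (N + 1))" using assms by simp
  ultimately show ?thesis by (metis abs_of_nonneg)
qed

lemma frac2:
  fixes N s :: real
  assumes "1 \<le> N" "0 \<le> s" "s + 1 \<le> N"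
  shows "\<bar>(s + 1) / N - (s + 2) / (N + 1)\<bar> \<le> 1 / N"
proof -
  have "0 \<le> N * N" using assms by simp
  then have nz: "N + N * N \<noteq> 0" "N \<noteq> 0" using assms by linarith+
  have "(s + 1) / N - (s + 2) / (N + 1) = (s + 1 - N) / (N * (N + 1))" using assms nz by (simp add: field_simps)
  then have "\<bar>(s + 1) / N - (s + 2) / (N + 1)\<bar> = \<bar>s + 1 - N\<bar> / (N * (N + 1))" using assms by (simp add: abs_divide)
  also have "\<dots> \<le> (N + 1) / (N * (N + 1))" using assms by (intro divide_right_mono) auto
  also have "(N + 1) / (N * (N + 1)) = 1 / N" using assms nz by (simp add: field_simps)
  finally show ?thesis .
qed

definition eta :: "real \<Rightarrow> real \<Rightarrow> nat \<Rightarrow> real" where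
  "eta \<Gamma> B n = 6 * \<bar>\<Gamma>\<bar> / real (n - 1) + 6 * \<bar>B\<bar> * sqrt (2 / real (n - 1))"

lemma Z_entry:
  assumes n: "2 \<le> n" and i: "i < n" and j: "j < n"
  shows "cmod ((Aseq \<Gamma> B n - BseqM \<Gamma> B n) $$ (i,j)) \<le> eta \<Gamma> B n"
    "\<not> (j = i \<or> j = i + 1 \<or> i = j + 1) \<Longrightarrow> (Aseq \<Gamma> B n - BseqM \<Gamma> B n) $$ (i,j) = 0"
proof -
  define N where "N = n - 1"
  have nN: "n = N + 1" and N1: "1 \<le> N" using n unfolding N_def by auto
  have RN: "real N \<ge> 1" using N1 by simp
  have Rn: "real n = real N + 1" using nN by simp
  have eA: "Aseq \<Gamma> B n $$ (i,j) = complex_of_real (tri (dN \<Gamma> N) (eN B N) i j)"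
    using i j n Hbar_tri[of i N j \<Gamma> B] Hbar_carrier[of \<Gamma> B N] unfolding Aseq_def N_def by auto
  have eZ: "(Aseq \<Gamma> B n - BseqM \<Gamma> B n) $$ (i,j) = Aseq \<Gamma> B n $$ (i,j) - BseqM \<Gamma> B n $$ (i,j)"
    using Bseq_carrier[of \<Gamma> B n] i j by (intro index_minus_mat(1)) auto
  note eB = Bseq_entry[OF i j, of \<Gamma> B]
  have et: "0 \<le> 6 * \<bar>\<Gamma>\<bar> / real N" "0 \<le> 6 * \<bar>B\<bar> * sqrt (2 / real N)" by auto
  have etaN: "eta \<Gamma> B n = 6 * \<bar>\<Gamma>\<bar> / real N + 6 * \<bar>B\<bar> * sqrt (2 / real N)" unfolding eta_def N_def ..
  have pt: "(real k + 1) / real N \<in> {0..2}" if "k < n" for k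
    using that RN nN by (simp add: field_simps)
  have pt': "(real k + 1) / real n \<in> {0..2}" if "k < n" for k
    using that RN nN by (simp add: field_simps)
  have sq: "6 * \<bar>B\<bar> * sqrt (t + 1 / real N) \<le> 6 * \<bar>B\<bar> * sqrt (2 / real N)" if "t \<le> 1 / real N" for t
    using that by (intro mult_left_mono real_sqrt_le_mono) auto
  show "\<not> (j = i \<or> j = i + 1 \<or> i = j + 1) \<Longrightarrow> (Aseq \<Gamma> B n - BseqM \<Gamma> B n) $$ (i,j) = 0"
    unfolding eZ eA eB by (auto simp: tri_def)
  consider (d) "i = j" | (u) "j = i + 1" | (l) "i = j + 1" | (o) "\<not> (j = i \<or> j = i + 1 \<or> i = j + 1)" by auto
  then show "cmod ((Aseq \<Gamma> B n - BseqM \<Gamma> B n) $$ (i,j)) \<le> eta \<Gamma> B n"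
  proof cases
    case d
    have v: "(Aseq \<Gamma> B n - BseqM \<Gamma> B n) $$ (i,j) = complex_of_real (gg \<Gamma> ((real i + 1) / real N) - gg \<Gamma> ((real i + 1) / real n))"
      unfolding eZ eA eB using d by (simp add: tri_def dN_def ag_def)
    have "\<bar>gg \<Gamma> ((real i + 1) / real N) - gg \<Gamma> ((real i + 1) / real n)\<bar> \<le> 6 * \<bar>\<Gamma>\<bar> * \<bar>(real i + 1) / real N - (real i + 1) / real n\<bar>"
      by (rule gg_lip[OF pt[OF i] pt'[OF i]])
    also have "\<dots> \<le> 6 * \<bar>\<Gamma>\<bar> * (1 / real N)"
      using frac1[of "real N" "real i + 1"] RN i nN unfolding Rn by (intro mult_left_mono) auto
    also have "\<dots> = 6 * \<bar>\<Gamma>\<bar> / real N" by simp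
    finally show ?thesis using et unfolding v norm_of_real etaN by linarith
  next
    case u
    have v: "(Aseq \<Gamma> B n - BseqM \<Gamma> B n) $$ (i,j) = complex_of_real (eN B N i - cc B ((real i + 1) / real n))"
      unfolding eZ eA eB using u by (simp add: tri_def ac_def)
    have iN: "i < N + 1" using i nN by simp
    have "\<bar>eN B N i - cc B ((real i + 1) / real n)\<bar> \<le> 6 * \<bar>B\<bar> * sqrt (\<bar>(real i + 1) / real N - (real i + 1) / real n\<bar> + 1 / real N)"
      by (rule eN_cc[OF N1 iN pt'[OF i]])
    also have "\<dots> \<le> 6 * \<bar>B\<bar> * sqrt (2 / real N)"
      by (rule sq) (use frac1[of "real N" "real i + 1"] RN i nN Rn in auto)
    finally show ?thesis using et unfolding v norm_of_real etaN by linarith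
  next
    case l
    have v: "(Aseq \<Gamma> B n - BseqM \<Gamma> B n) $$ (i,j) = complex_of_real (eN B N j - cc B ((real j + 2) / real n))"
      unfolding eZ eA eB using l by (simp add: tri_def ac_def add.commute)
    have jN: "j < N + 1" using j nN by simp
    have jN': "real j + 1 \<le> real N" using i l nN by simp
    have "\<bar>eN B N j - cc B ((real j + 2) / real n)\<bar> \<le> 6 * \<bar>B\<bar> * sqrt (\<bar>(real j + 1) / real N - (real j + 2) / real n\<bar> + 1 / real N)"
      by (rule eN_cc[OF N1 jN]) (use pt'[OF i] l in \<open>simp add: add.commute\<close>)
    also have "\<dots> \<le> 6 * \<bar>B\<bar> * sqrt (2 / real N)"
      by (rule sq) (use frac2[of "real N" "real j"] RN jN' Rn in auto)
    finally show ?thesis using et unfolding v norm_of_real etaN by linarith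
  next
    case o
    have "(Aseq \<Gamma> B n - BseqM \<Gamma> B n) $$ (i,j) = 0" unfolding eZ eA eB using o by (auto simp: tri_def)
    then show ?thesis unfolding etaN using et by simp
  qed
qed

lemma eta_lim: "eta \<Gamma> B \<longlonglongrightarrow> 0"
proof -
  have a: "(\<lambda>n. 6 * \<bar>\<Gamma>\<bar> / real n) \<longlonglongrightarrow> 0" by (rule lim_const_over_n)
  have b: "(\<lambda>n. sqrt (2 / real n)) \<longlonglongrightarrow> 0" using tendsto_real_sqrt[OF lim_const_over_n[of 2]] by simp
  have "(\<lambda>n. 6 * \<bar>\<Gamma>\<bar> / real n + 6 * \<bar>B\<bar> * sqrt (2 / real n)) \<longlonglongrightarrow> 0 + 6 * \<bar>B\<bar> * 0"
    by (intro tendsto_add a tendsto_mult tendsto_const b)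
  then have "(\<lambda>n. eta \<Gamma> B (Suc n)) \<longlonglongrightarrow> 0" unfolding eta_def by simp
  then show ?thesis by (simp add: filterlim_sequentially_Suc)
qed

lemma Z_spec: "2 \<le> n \<Longrightarrow> spec_norm (Aseq \<Gamma> B n - BseqM \<Gamma> B n) \<le> 3 * eta \<Gamma> B n"
proof -
  assume n: "2 \<le> n"
  have "0 \<le> eta \<Gamma> B n" unfolding eta_def by simp
  then show ?thesis
    using Z_entry[OF n] Aseq_carrier[of \<Gamma> B n] Bseq_carrier[of \<Gamma> B n]
    by (intro tridiag_spec) auto
qed

lemma GLT_main: "GLT (\<lambda>n. if n = 0 then 0\<^sub>m 0 0 else map_mat complex_of_real (Hbar \<Gamma> B (n - 1))) (h0CW \<Gamma> B)"
proof -
  have A: "(\<lambda>n. if n = 0 then 0\<^sub>m 0 0 else map_mat complex_of_real (Hbar \<Gamma> B (n - 1))) = Aseq \<Gamma> B"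
    unfolding Aseq_def[abs_def] ..
  have meas: "h0CW \<Gamma> B \<in> borel_measurable (lebesgue_on symD)"
  proof (rule continuous_imp_measurable_on_sets_lebesgue)
    show "continuous_on symD (h0CW \<Gamma> B)" by (rule continuous_on_subset[OF cont_h]) auto
    show "symD \<in> sets lebesgue" unfolding symD_cbox by (rule fmeasurableD) simp
  qed
  have mseq: "mseq (Aseq \<Gamma> B)" unfolding mseq_def using Aseq_carrier by blast
  have conv: "conv_in_measure (\<lambda>m. h0CW \<Gamma> B) (h0CW \<Gamma> B)"
    unfolding conv_in_measure_def by simp
  have acs: "acs (\<lambda>m. BseqM \<Gamma> B) (Aseq \<Gamma> B)"
    unfolding acs_def
  proof (rule exI[of _ "\<lambda>m. 0"], rule exI[of _ "\<lambda>m. 1 / (real m + 1)"], intro conjI allI)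
    show "(\<lambda>m. 0::real) \<longlonglongrightarrow> 0" by simp
    show "(\<lambda>m. 1 / (real m + 1)) \<longlonglongrightarrow> 0"
      using LIMSEQ_Suc[OF lim_const_over_n[of 1]] by (simp add: add.commute)
    fix m :: nat
    have pos: "0 < 1 / (real m + 1) / 3" by simp
    obtain n0 where n0: "\<And>n. n \<ge> n0 \<Longrightarrow> norm (eta \<Gamma> B n - 0) < 1 / (real m + 1) / 3"
      using LIMSEQ_D[OF eta_lim pos] by blast
    show "\<exists>nm. \<forall>n\<ge>nm. \<exists>R N. R \<in> carrier_mat n n \<and> N \<in> carrier_mat n n \<and>
        Aseq \<Gamma> B n = BseqM \<Gamma> B n + R + N \<and> real (vec_space.rank n R) \<le> 0 * real n \<and> spec_norm N \<le> 1 / (real m + 1)"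
    proof (intro exI[of _ "max n0 2"] allI impI)
      fix n assume n: "max n0 2 \<le> n"
      have Ac: "Aseq \<Gamma> B n \<in> carrier_mat n n" by (rule Aseq_carrier)
      have Bc: "BseqM \<Gamma> B n \<in> carrier_mat n n" by (rule Bseq_carrier)
      have sp: "spec_norm (Aseq \<Gamma> B n - BseqM \<Gamma> B n) \<le> 1 / (real m + 1)"
      proof -
        have "spec_norm (Aseq \<Gamma> B n - BseqM \<Gamma> B n) \<le> 3 * eta \<Gamma> B n" using n by (intro Z_spec) auto
        also have "\<dots> \<le> 1 / (real m + 1)"
        proof -
          define w where "w = 1 / (real m + 1)"
          have "eta \<Gamma> B n < w / 3" using n0[of n] n unfolding w_def by auto
          then have "3 * eta \<Gamma> B n \<le> w" by linarith
          then show ?thesis unfolding w_def .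
        qed
        finally show ?thesis .
      qed
      have eq: "Aseq \<Gamma> B n = BseqM \<Gamma> B n + 0\<^sub>m n n + (Aseq \<Gamma> B n - BseqM \<Gamma> B n)"
        by (rule eq_matI) (use Ac Bc in auto)
      show "\<exists>R N. R \<in> carrier_mat n n \<and> N \<in> carrier_mat n n \<and>
        Aseq \<Gamma> B n = BseqM \<Gamma> B n + R + N \<and> real (vec_space.rank n R) \<le> 0 * real n \<and> spec_norm N \<le> 1 / (real m + 1)"
        by (intro exI[of _ "0\<^sub>m n n"] exI[of _ "Aseq \<Gamma> B n - BseqM \<Gamma> B n"])
           (use eq sp Ac Bc vec_space.rank_0I in auto)
    qed
  qed
  show ?thesis unfolding A
    by (rule GLT.limit[where Bs="\<lambda>m. BseqM \<Gamma> B" and \<kappa>s="\<lambda>m. h0CW \<Gamma> B"])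
       (use GLT_B mseq acs meas conv in auto)
qed

theorem mainTheorem6:
  fixes \<Gamma> B :: real
  assumes "\<Gamma> > 0"
  shows "GLT (\<lambda>n. if n = 0 then 0\<^sub>m 0 0 else map_mat complex_of_real (Hbar \<Gamma> B (n - 1))) (h0CW \<Gamma> B)
    \<and> sigma_distributed (\<lambda>N. map_mat complex_of_real (Hbar \<Gamma> B N)) (h0CW \<Gamma> B)
    \<and> lambda_distributed (\<lambda>N. map_mat complex_of_real (Hbar \<Gamma> B N)) (h0CW \<Gamma> B)"
  using GLT_main sigma_part lambda_part by blast

end
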